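(* Let $\mathbf{k}=(k_1,\dots,k_s)$ be a sequence of positive integers with $\sum_{i=1}^s k_i=n$, and put $n_0=0$, $n_i=\sum_{j=1}^i k_j$. Let $\lambda=(\lambda_1,\dots,\lambda_n)$ be real numbers with $\lambda_1=\cdots=\lambda_{n_1}>\lambda_{n_1+1}=\cdots=\lambda_{n_2}>\cdots>\lambda_{n_{s-1}+1}=\cdots=\lambda_{n_s}$. Then there is a bijection $\phi:\mathcal{F}(\mathcal{P}_\lambda)\to\mathcal{F}(\Gamma_{\mathbf{k}})$ from the set of (nonempty) faces of the Gelfand–Cetlin polytope $\mathcal{P}_\lambda$ to the set of faces of the ladder diagram $\Gamma_{\mathbf{k}}$ such that for all faces $F,F'$ of $\mathcal{P}_\lambda$: $F\subseteq F'$ if and only if $\phi(F)\subseteq\phi(F')$, and $\dim\phi(F)=\dim F$. In particular $\phi$ is an isomorphism of face lattices preserving dimension.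
   Context: Gelfand–Cetlin polytope: let $I=\{(i,j)\in\mathbb{Z}^2: i,j\ge1,\ i+j\le n\}$ and $d=|I|=\binom n2$. With coordinates $(x_{i,j})_{(i,j)\in I}$ on $\mathbb{R}^d$ and the convention $x_{i,n+1-i}:=\lambda_i$ for $i=1,\dots,n$, $\mathcal{P}_\lambda=\{x\in\mathbb{R}^d: x_{i,j+1}\ge x_{i,j}\ge x_{i+1,j}\text{ for all }(i,j)\in I\}$. Let $Q^+$ be the infinite directed graph with vertex set $\mathbb{Z}_{\ge0}\times\mathbb{Z}_{\ge0}$ and a directed edge $((i,j),(i',j'))$ iff $(i',j')=(i,j+1)$ or $(i',j')=(i+1,j)$. Terminal vertices: $T_{\mathbf{k}}=\{(n_\ell,n-n_\ell):0\le\ell\le s\}$. The ladder diagram $\Gamma_{\mathbf{k}}$ is the induced subgraph of $Q^+$ on the vertex set $\{(a,b): a\le c,\ b\le d\text{ for some }(c,d)\in T_{\mathbf{k}}\}$. The vertex $(0,0)$ is the origin. A positive path is a shortest (directed) path in $\Gamma_{\mathbf{k}}$ from the origin to a terminal vertex. A face of $\Gamma_{\mathbf{k}}$ is a subgraph $\gamma$ whose vertex set contains all terminal vertices and which is a union of positive paths; $\mathcal{F}(\Gamma_{\mathbf{k}})$ denotes the set of faces, ordered by inclusion of subgraphs. The dimension of a face $\gamma$ is $\operatorname{rank}H_1(\gamma)$, regarding $\gamma$ as a 1-dimensional CW complex (the number of independent cycles). *)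

theory Defs
  imports "HOL-Analysis.Analysis"
begin

definition GC_index :: "nat \<Rightarrow> (nat \<times> nat) set" where
  "GC_index n = {(i,j). 1 \<le> i \<and> 1 \<le> j \<and> i + j \<le> n}"

text \<open>The ambient space R^I is realised isometrically inside real^'d via an injective
  labelling e of the index set by coordinates of 'd (other coordinates are 0).\<close>
definition GC_coord :: "nat \<Rightarrow> (nat \<Rightarrow> real) \<Rightarrow> (nat \<times> nat \<Rightarrow> 'd) \<Rightarrow> real ^ 'd \<Rightarrow> nat \<times> nat \<Rightarrow> real" where
  "GC_coord n lam e x p = (if fst p + snd p = n + 1 then lam (fst p) else x $ e p)"

definition GC_polytope :: "nat \<Rightarrow> (nat \<Rightarrow> real) \<Rightarrow> (nat \<times> nat \<Rightarrow> 'd::finite) \<Rightarrow> (real ^ 'd) set" where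
  "GC_polytope n lam e =
     {x. (\<forall>t. t \<notin> e ` GC_index n \<longrightarrow> x $ t = 0) \<and>
         (\<forall>(i,j) \<in> GC_index n.
            GC_coord n lam e x (i, j+1) \<ge> GC_coord n lam e x (i, j) \<and>
            GC_coord n lam e x (i, j) \<ge> GC_coord n lam e x (i+1, j))}"

definition nonempty_faces :: "'a::real_vector set \<Rightarrow> 'a set set" where
  "nonempty_faces P = {F. F face_of P \<and> F \<noteq> {}}"

type_synonym vtx = "nat \<times> nat"
type_synonym graph = "vtx set \<times> (vtx \<times> vtx) set"

definition partial_sum :: "nat list \<Rightarrow> nat \<Rightarrow> nat" where
  "partial_sum k l = sum_list (take l k)"

definition terminals :: "nat list \<Rightarrow> vtx set" where
  "terminals k = {(partial_sum k l, sum_list k - partial_sum k l) | l. l \<le> length k}"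

definition ladder_vertices :: "nat list \<Rightarrow> vtx set" where
  "ladder_vertices k = {(a,b). \<exists>(c,d) \<in> terminals k. a \<le> c \<and> b \<le> d}"

definition ladder_edges :: "nat list \<Rightarrow> (vtx \<times> vtx) set" where
  "ladder_edges k = {((a,b),(c,d)). (a,b) \<in> ladder_vertices k \<and> (c,d) \<in> ladder_vertices k \<and>
       ((c,d) = (a, b+1) \<or> (c,d) = (a+1, b))}"

definition ladder_walk :: "nat list \<Rightarrow> vtx list \<Rightarrow> bool" where
  "ladder_walk k p \<longleftrightarrow> p \<noteq> [] \<and> set p \<subseteq> ladder_vertices k \<and>
      (\<forall>i. i + 1 < length p \<longrightarrow> (p ! i, p ! (i+1)) \<in> ladder_edges k)"

definition path_edges :: "vtx list \<Rightarrow> (vtx \<times> vtx) set" where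
  "path_edges p = {(p ! i, p ! (i+1)) | i. i + 1 < length p}"

definition positive_path :: "nat list \<Rightarrow> vtx list \<Rightarrow> bool" where
  "positive_path k p \<longleftrightarrow> ladder_walk k p \<and> hd p = (0,0) \<and> last p \<in> terminals k \<and>
      (\<forall>q. ladder_walk k q \<and> hd q = (0,0) \<and> last q = last p \<longrightarrow> length p \<le> length q)"

definition ladder_faces :: "nat list \<Rightarrow> graph set" where
  "ladder_faces k = {(V, E). terminals k \<subseteq> V \<and>
      (\<exists>S. (\<forall>p\<in>S. positive_path k p) \<and> V = (\<Union>p\<in>S. set p) \<and> E = (\<Union>p\<in>S. path_edges p))}"

definition subgraph :: "graph \<Rightarrow> graph \<Rightarrow> bool" where
  "subgraph g h \<longleftrightarrow> fst g \<subseteq> fst h \<and> snd g \<subseteq> snd h"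

text \<open>Rank of H_1 of a finite graph viewed as 1-dimensional CW complex:
  |E| - |V| + (number of connected components).\<close>
definition num_components :: "graph \<Rightarrow> nat" where
  "num_components g = card (fst g // ((snd g \<union> (snd g)\<inverse>)\<^sup>*))"

definition graph_dim :: "graph \<Rightarrow> int" where
  "graph_dim g = int (card (snd g)) - int (card (fst g)) + int (num_components g)"

definition lambda_of_type :: "nat list \<Rightarrow> (nat \<Rightarrow> real) \<Rightarrow> bool" where
  "lambda_of_type k lam \<longleftrightarrow>
     (\<forall>l < length k. \<forall>i. partial_sum k l < i \<and> i \<le> partial_sum k (Suc l) \<longrightarrow>
          lam i = lam (partial_sum k (Suc l))) \<and>
     (\<forall>l. Suc l < length k \<longrightarrow> lam (partial_sum k (Suc l)) > lam (partial_sum k (Suc l) + 1))"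

end

theory Submission
  imports Defs
begin

lemma path_edges_single[simp]: "path_edges [x] = {}"
  by (simp add: path_edges_def)

lemma path_edges_snoc:
  assumes "p \<noteq> []" shows "path_edges (p @ [v]) = insert (last p, v) (path_edges p)"
proof (intro set_eqI iffI)
  fix x assume "x \<in> path_edges (p @ [v])"
  then obtain i where i: "x = ((p@[v])!i, (p@[v])!(i+1))" "i+1 < length p + 1"
    by (auto simp: path_edges_def)
  show "x \<in> insert (last p, v) (path_edges p)"
  proof (cases "i+1 < length p")
    case True then show ?thesis using i by (auto simp: nth_append path_edges_def)
  next
    case False then have "i = length p - 1" using i by auto
    then show ?thesis using i assms by (auto simp: nth_append last_conv_nth)
  qed
next
  fix x assume "x \<in> insert (last p, v) (path_edges p)"
  then show "x \<in> path_edges (p @ [v])"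
  proof
    assume "x = (last p, v)"
    then show ?thesis using assms unfolding path_edges_def
      by (intro CollectI exI[of _ "length p - 1"]) (auto simp: nth_append last_conv_nth)
  next
    assume "x \<in> path_edges p"
    then obtain i where "x = (p!i, p!(i+1))" "i+1 < length p" by (auto simp: path_edges_def)
    then show ?thesis unfolding path_edges_def
      by (intro CollectI exI[of _ i]) (auto simp: nth_append)
  qed
qed

lemma path_edges_in_set: "(u,v) \<in> path_edges p \<Longrightarrow> u \<in> set p \<and> v \<in> set p"
  by (auto simp: path_edges_def)

inductive sw :: "vtx list \<Rightarrow> bool" where
  sw0: "sw [(0,0)]"
| swR: "sw p \<Longrightarrow> last p = (a,b) \<Longrightarrow> sw (p @ [(Suc a, b)])"
| swU: "sw p \<Longrightarrow> last p = (a,b) \<Longrightarrow> sw (p @ [(a, Suc b)])"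

definition inL :: "vtx list \<Rightarrow> nat \<Rightarrow> nat \<Rightarrow> bool" where
  "inL p i j \<longleftrightarrow> i = 0 \<or> (\<exists>b<j. ((i - 1, b), (i, b)) \<in> path_edges p)"

lemma sw_ne: "sw p \<Longrightarrow> p \<noteq> [] \<and> hd p = (0,0)"
  by (induction rule: sw.induct) auto

lemma sw_length: "sw p \<Longrightarrow> length p = fst (last p) + snd (last p) + 1"
  by (induction rule: sw.induct) auto

lemma sw_le: "sw p \<Longrightarrow> u \<in> set p \<Longrightarrow> fst u \<le> fst (last p) \<and> snd u \<le> snd (last p)"
  by (induction arbitrary: u rule: sw.induct) (auto, (metis fst_conv snd_conv le_SucI)+)

lemma sw_step: "sw p \<Longrightarrow> (u,v) \<in> path_edges p \<Longrightarrow> v = (Suc (fst u), snd u) \<or> v = (fst u, Suc (snd u))"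
proof (induction rule: sw.induct)
  case sw0 then show ?case by simp
next
  case (swR p a b)
  then have "p \<noteq> []" using sw_ne by blast
  then show ?case using swR by (auto simp: path_edges_snoc)
next
  case (swU p a b)
  then have "p \<noteq> []" using sw_ne by blast
  then show ?case using swU by (auto simp: path_edges_snoc)
qed

lemma sw_cross: "sw p \<Longrightarrow> 1 \<le> i \<Longrightarrow> i \<le> fst (last p) \<Longrightarrow> \<exists>b. ((i-1,b),(i,b)) \<in> path_edges p"
proof (induction arbitrary: i rule: sw.induct)
  case sw0 then show ?case by simp
next
  case (swR p a b)
  then have ne: "p \<noteq> []" using sw_ne by blast
  show ?case
  proof (cases "i = Suc a")
    case True then show ?thesis using ne swR(2) by (auto simp: path_edges_snoc)
  next
    case False then show ?thesis using ne swR by (auto simp: path_edges_snoc)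
  qed
next
  case (swU p a b)
  then have ne: "p \<noteq> []" using sw_ne by blast
  then show ?case using swU by (auto simp: path_edges_snoc)
qed

lemma sw_cross_le: "sw p \<Longrightarrow> ((i,b),(Suc i,b)) \<in> path_edges p \<Longrightarrow> Suc i \<le> fst (last p) \<and> b \<le> snd (last p)"
  using sw_le path_edges_in_set by fastforce

lemma sw_unique: "sw p \<Longrightarrow> ((i,b),(Suc i,b)) \<in> path_edges p \<Longrightarrow> ((i,b'),(Suc i,b')) \<in> path_edges p \<Longrightarrow> b = b'"
proof (induction rule: sw.induct)
  case sw0 then show ?case by simp
next
  case (swR p a c)
  have ne: "p \<noteq> []" using swR sw_ne by blast
  show ?case
  proof (cases "i = a")
    case True
    then have "((i,b),(Suc i,b)) \<notin> path_edges p" "((i,b'),(Suc i,b')) \<notin> path_edges p"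
      using sw_cross_le[OF swR(1)] swR(2) by fastforce+
    then show ?thesis using swR(4,5) ne by (auto simp: path_edges_snoc swR(2))
  next
    case False
    then show ?thesis using swR ne by (auto simp: path_edges_snoc)
  qed
next
  case (swU p a c)
  have ne: "p \<noteq> []" using swU sw_ne by blast
  then show ?case using swU by (auto simp: path_edges_snoc)
qed

lemma sw_mono: "sw p \<Longrightarrow> ((Suc i,b),(Suc (Suc i),b)) \<in> path_edges p \<Longrightarrow> \<exists>b'\<le>b. ((i,b'),(Suc i,b')) \<in> path_edges p"
proof (induction rule: sw.induct)
  case sw0 then show ?case by simp
next
  case (swR p a c)
  have ne: "p \<noteq> []" using swR sw_ne by blast
  show ?case
  proof (cases "((Suc i,b),(Suc (Suc i),b)) \<in> path_edges p")
    case True then show ?thesis using swR ne by (auto simp: path_edges_snoc)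
  next
    case False
    then have "a = Suc i" "c = b" using swR(4) ne swR(2) by (auto simp: path_edges_snoc)
    then obtain b' where b': "((i,b'),(Suc i,b')) \<in> path_edges p"
      using sw_cross[OF swR(1), of "Suc i"] swR(2) by auto
    then have "b' \<le> c" using sw_cross_le[OF swR(1) b'] swR(2) by simp
    then show ?thesis using b' ne \<open>c = b\<close> by (auto simp: path_edges_snoc)
  qed
next
  case (swU p a c)
  have ne: "p \<noteq> []" using swU sw_ne by blast
  then show ?case using swU by (auto simp: path_edges_snoc)
qed

lemma inL_beyond: "sw p \<Longrightarrow> fst (last p) < i \<Longrightarrow> \<not> inL p i j"
  unfolding inL_def using sw_cross_le[of p "i - 1"] by (cases i) auto

lemma inL_above: "sw p \<Longrightarrow> i \<le> fst (last p) \<Longrightarrow> snd (last p) < j \<Longrightarrow> inL p i j"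
proof -
  assume a: "sw p" "i \<le> fst (last p)" "snd (last p) < j"
  show ?thesis
  proof (cases "i = 0")
    case True then show ?thesis by (simp add: inL_def)
  next
    case False
    then obtain b where b: "((i-1,b),(i,b)) \<in> path_edges p" using sw_cross[OF a(1), of i] a by auto
    then have "b \<le> snd (last p)" using sw_cross_le[OF a(1), of "i - 1" b] False by simp
    then show ?thesis using b a(3) unfolding inL_def by (intro disjI2 exI[of _ b]) auto
  qed
qed

lemma inL_snocR: "p \<noteq> [] \<Longrightarrow> last p = (a0,c0) \<Longrightarrow>
   inL (p @ [(Suc a0, c0)]) i j \<longleftrightarrow> inL p i j \<or> (i = Suc a0 \<and> c0 < j)"
  by (auto simp: inL_def path_edges_snoc)

lemma inL_snocU: "p \<noteq> [] \<Longrightarrow> last p = (a0,c0) \<Longrightarrow>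
   inL (p @ [(a0, Suc c0)]) i j \<longleftrightarrow> inL p i j"
  by (auto simp: inL_def path_edges_snoc)

lemma sw_vert: "sw p \<Longrightarrow> ((a,b),(a,Suc b)) \<in> path_edges p \<longleftrightarrow>
    (inL p a (Suc b) \<and> \<not> inL p (Suc a) (Suc b) \<and> Suc b \<le> snd (last p))"
proof (induction arbitrary: a b rule: sw.induct)
  case sw0 then show ?case by simp
next
  case (swR p a0 c0)
  then have ne: "p \<noteq> []" using sw_ne by blast
  have L: "((a,b),(a,Suc b)) \<in> path_edges (p @ [(Suc a0, c0)]) \<longleftrightarrow> ((a,b),(a,Suc b)) \<in> path_edges p"
    using ne swR(2) by (auto simp: path_edges_snoc)
  show ?case
  proof (cases "Suc b \<le> c0")
    case True
    then show ?thesis unfolding L using swR.IH[of a b] swR(2) ne by (auto simp: inL_snocR)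
  next
    case False
    then show ?thesis unfolding L using swR.IH[of a b] swR(2) ne by auto
  qed
next
  case (swU p a0 c0)
  then have ne: "p \<noteq> []" using sw_ne by blast
  have L: "((a,b),(a,Suc b)) \<in> path_edges (p @ [(a0, Suc c0)]) \<longleftrightarrow> ((a,b),(a,Suc b)) \<in> path_edges p \<or> (a = a0 \<and> b = c0)"
    using ne swU(2) by (auto simp: path_edges_snoc)
  have R: "inL (p @ [(a0, Suc c0)]) i j \<longleftrightarrow> inL p i j" for i j using inL_snocU[OF ne swU(2)] .
  show ?case
  proof (cases "b < c0")
    case True
    then show ?thesis unfolding L R using swU.IH[of a b] swU(2) by auto
  next
    case False
    note IH = swU.IH[of a b]
    show ?thesis
    proof (cases "b = c0")
      case True
      have "a = a0 \<longleftrightarrow> inL p a (Suc c0) \<and> \<not> inL p (Suc a) (Suc c0)"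
      proof (cases a0 a rule: linorder_cases)
        case less
        then show ?thesis using inL_beyond[OF swU(1), of a] swU(2) by (auto simp: inL_def)
      next
        case equal
        then show ?thesis using inL_beyond[OF swU(1), of "Suc a"] inL_above[OF swU(1), of a "Suc c0"] swU(2) by auto
      next
        case greater
        then show ?thesis using inL_above[OF swU(1), of "Suc a" "Suc c0"] swU(2) by auto
      qed
      then show ?thesis unfolding L R using IH swU(2) True by auto
    next
      case False
      then show ?thesis unfolding L R using IH swU(2) \<open>\<not> b < c0\<close> by auto
    qed
  qed
qed

lemma sw_horiz: "sw p \<Longrightarrow> ((a,b),(Suc a,b)) \<in> path_edges p \<longleftrightarrow>
    (inL p (Suc a) (Suc b) \<and> \<not> inL p (Suc a) b)"
  unfolding inL_def using sw_unique[of p a b] by (auto simp: less_Suc_eq)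


lemma ps_le: "partial_sum k l \<le> sum_list k"
  unfolding partial_sum_def
  by (metis append_take_drop_id le_add1 sum_list_append)

lemma ps_0[simp]: "partial_sum k 0 = 0" by (simp add: partial_sum_def)

lemma ps_len: "length k \<le> l \<Longrightarrow> partial_sum k l = sum_list k"
  by (simp add: partial_sum_def)

lemma ps_Suc: "l < length k \<Longrightarrow> partial_sum k (Suc l) = partial_sum k l + k ! l"
  by (simp add: partial_sum_def take_Suc_conv_app_nth)

lemma ps_mono: "l \<le> l' \<Longrightarrow> partial_sum k l \<le> partial_sum k l'"
proof (induction l' )
  case 0 then show ?case by simp
next
  case (Suc l')
  then show ?case
  proof (cases "l = Suc l'")
    case False
    then have "partial_sum k l \<le> partial_sum k l'" using Suc by simp
    also have "\<dots> \<le> partial_sum k (Suc l')"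
      by (cases "l' < length k") (auto simp: ps_Suc ps_len)
    finally show ?thesis .
  qed simp
qed

lemma ps_find: "c < partial_sum k m \<Longrightarrow> \<exists>l<m. partial_sum k l \<le> c \<and> c < partial_sum k (Suc l)"
proof (induction m)
  case 0 then show ?case by simp
next
  case (Suc m)
  show ?case
  proof (cases "c < partial_sum k m")
    case True then show ?thesis using Suc by (meson less_SucI)
  next
    case False then show ?thesis using Suc.prems by (intro exI[of _ m]) auto
  qed
qed

lemma terminal_sum: "(c,d) \<in> terminals k \<Longrightarrow> c + d = sum_list k \<and> c \<le> sum_list k"
  unfolding terminals_def using ps_le by force

lemma ladder_walk_butlast:
  assumes "ladder_walk k (xs @ [x])" "xs \<noteq> []" shows "ladder_walk k xs"
  unfolding ladder_walk_def
proof (intro conjI allI impI)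
  show "xs \<noteq> []" by fact
  show "set xs \<subseteq> ladder_vertices k" using assms(1) by (auto simp: ladder_walk_def)
  fix i assume i: "i + 1 < length xs"
  have "((xs @ [x]) ! i, (xs @ [x]) ! (i + 1)) \<in> ladder_edges k"
    using assms(1) i unfolding ladder_walk_def by auto
  then show "(xs ! i, xs ! (i + 1)) \<in> ladder_edges k" using i by (simp add: nth_append)
qed

lemma ladder_walk_sw: "ladder_walk k q \<Longrightarrow> hd q = (0,0) \<Longrightarrow> sw q"
proof (induction q rule: rev_induct)
  case Nil then show ?case by (simp add: ladder_walk_def)
next
  case (snoc x xs)
  show ?case
  proof (cases "xs = []")
    case True then show ?thesis using snoc by (simp add: sw0)
  next
    case False
    have lw: "ladder_walk k xs" using snoc.prems(1) False by (rule ladder_walk_butlast)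
    have sxs: "sw xs" using snoc.IH[OF lw] snoc.prems False by simp
    have "(xs ! (length xs - 1), x) \<in> ladder_edges k"
      using snoc.prems(1) False unfolding ladder_walk_def
      apply (elim conjE)
      apply (drule spec[of _ "length xs - 1"])
      by (auto simp: nth_append)
    then have e: "(last xs, x) \<in> ladder_edges k" using False by (simp add: last_conv_nth)
    obtain a b where l: "last xs = (a,b)" by fastforce
    from e l have "x = (a, Suc b) \<or> x = (Suc a, b)" unfolding ladder_edges_def by auto
    then show ?thesis using sw.swR[OF sxs l] sw.swU[OF sxs l] by auto
  qed
qed

lemma sw_nth_edge: "i + 1 < length p \<Longrightarrow> (p ! i, p ! (i+1)) \<in> path_edges p"
  by (auto simp: path_edges_def)

lemma sw_positive:
  assumes "sw p" "last p \<in> terminals k"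
  shows "positive_path k p"
proof -
  obtain c d where cd: "last p = (c,d)" by fastforce
  have lv: "set p \<subseteq> ladder_vertices k"
  proof
    fix u assume "u \<in> set p"
    then have "fst u \<le> c \<and> snd u \<le> d" using sw_le[OF assms(1)] cd by fastforce
    then show "u \<in> ladder_vertices k" using assms(2) cd unfolding ladder_vertices_def
      by (cases u) auto
  qed
  have lw: "ladder_walk k p"
    unfolding ladder_walk_def
  proof (intro conjI allI impI)
    show "p \<noteq> []" using sw_ne[OF assms(1)] by simp
    show "set p \<subseteq> ladder_vertices k" by (rule lv)
  next
    fix i assume i: "i + 1 < length p"
    then have e: "(p ! i, p ! (i+1)) \<in> path_edges p" by (rule sw_nth_edge)
    have "p ! i \<in> ladder_vertices k" "p ! (i+1) \<in> ladder_vertices k" using lv i by auto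
    then show "(p ! i, p ! (i+1)) \<in> ladder_edges k"
      using sw_step[OF assms(1) e] unfolding ladder_edges_def
      by (cases "p ! i"; cases "p ! (i+1)") auto
  qed
  show ?thesis unfolding positive_path_def
  proof (intro conjI allI impI)
    show "ladder_walk k p" by (rule lw)
    show "hd p = (0,0)" using sw_ne[OF assms(1)] by simp
    show "last p \<in> terminals k" by (rule assms(2))
  next
    fix q assume q: "ladder_walk k q \<and> hd q = (0, 0) \<and> last q = last p"
    then have "sw q" using ladder_walk_sw by blast
    then show "length p \<le> length q" using sw_length[OF assms(1)] sw_length[of q] q by simp
  qed
qed

lemma positive_sw: "positive_path k p \<Longrightarrow> sw p \<and> last p \<in> terminals k"
  unfolding positive_path_def using ladder_walk_sw by blast

lemma positive_terminal_last:
  assumes "positive_path k p" "u \<in> set p" "u \<in> terminals k"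
  shows "last p = u"
proof -
  have s: "sw p" "last p \<in> terminals k" using positive_sw[OF assms(1)] by auto
  have "fst u \<le> fst (last p)" "snd u \<le> snd (last p)" using sw_le[OF s(1) assms(2)] by auto
  moreover have "fst u + snd u = fst (last p) + snd (last p)"
    using terminal_sum[of "fst u" "snd u" k] terminal_sum[of "fst (last p)" "snd (last p)" k] s(2) assms(3)
    by simp
  ultimately show ?thesis by (cases u; cases "last p") auto
qed

lemma ladder_vertices_bound: "ladder_vertices k \<subseteq> {0..sum_list k} \<times> {0..sum_list k}"
  unfolding ladder_vertices_def using terminal_sum by fastforce

lemma finite_positive: "finite {p. positive_path k p}"
proof -
  have "{p. positive_path k p} \<subseteq> {p. set p \<subseteq> ladder_vertices k \<and> length p \<le> sum_list k + 1}"
  proof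
    fix p assume "p \<in> {p. positive_path k p}"
    then have pp: "positive_path k p" by simp
    then have s: "sw p" "last p \<in> terminals k" using positive_sw by auto
    have "set p \<subseteq> ladder_vertices k" using pp unfolding positive_path_def ladder_walk_def by auto
    moreover have "length p \<le> sum_list k + 1" using sw_length[OF s(1)] terminal_sum[of "fst (last p)" "snd (last p)" k] s(2)
      by simp
    ultimately show "p \<in> {p. set p \<subseteq> ladder_vertices k \<and> length p \<le> sum_list k + 1}" by simp
  qed
  moreover have "finite {p. set p \<subseteq> ladder_vertices k \<and> length p \<le> sum_list k + 1}"
    by (rule finite_lists_length_le) (rule finite_subset[OF ladder_vertices_bound], simp)
  ultimately show ?thesis by (rule finite_subset)
qed


definition nb :: "nat \<times> nat \<Rightarrow> bool \<Rightarrow> nat \<times> nat" where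
  "nb p dd = (if dd then (fst p, Suc (snd p)) else (Suc (fst p), snd p))"

definition Dg :: "nat \<Rightarrow> (nat \<Rightarrow> real) \<Rightarrow> (nat \<times> nat \<Rightarrow> 'd) \<Rightarrow> real^'d \<Rightarrow> (nat \<times> nat) \<times> bool \<Rightarrow> real" where
  "Dg n lm e y c = (if snd c then GC_coord n lm e y (nb (fst c) True) - GC_coord n lm e y (fst c)
                    else GC_coord n lm e y (fst c) - GC_coord n lm e y (nb (fst c) False))"

lemma small_pert:
  fixes D E :: "'a \<Rightarrow> real"
  assumes "finite K" "\<forall>c\<in>K. 0 < D c"
  shows "\<exists>\<delta>>0. \<forall>c\<in>K. 0 < D c + \<delta> * E c"
  using assms
proof (induction K rule: finite_induct)
  case empty then show ?case by (intro exI[of _ 1]) auto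
next
  case (insert x F)
  then obtain d1 where d1: "d1 > 0" "\<forall>c\<in>F. 0 < D c + d1 * E c" by auto
  define d2 where "d2 = D x / (\<bar>E x\<bar> + 1)"
  have Dx: "D x > 0" using insert by auto
  have d2: "d2 > 0" using Dx by (simp add: d2_def)
  define d where "d = min d1 d2"
  have dpos: "d > 0" using d1 d2 d_def by simp
  have "0 < D c + d * E c" if "c \<in> F" for c
  proof (cases "E c \<ge> 0")
    case True
    have "d * E c \<ge> 0" using dpos True by simp
    moreover have "D c > 0" using insert.prems that by auto
    ultimately show ?thesis by linarith
  next
    case False
    have "d \<le> d1" using d_def by simp
    then have "d1 * E c \<le> d * E c" using False by (intro mult_right_mono_neg) auto
    moreover have "0 < D c + d1 * E c" using d1 that by blast
    ultimately show ?thesis by linarith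
  qed
  moreover have "0 < D x + d * E x"
  proof -
    have "d * \<bar>E x\<bar> \<le> d2 * \<bar>E x\<bar>" using d_def by (intro mult_right_mono) auto
    also have "d2 * \<bar>E x\<bar> < D x"
    proof -
      have "D x * \<bar>E x\<bar> < D x * (\<bar>E x\<bar> + 1)" using Dx by simp
      then show ?thesis unfolding d2_def by (simp add: field_simps)
    qed
    finally have "d * \<bar>E x\<bar> < D x" .
    moreover have "- \<bar>E x\<bar> \<le> E x" by simp
    then have "d * (- \<bar>E x\<bar>) \<le> d * E x" using dpos by (intro mult_left_mono) auto
    ultimately show ?thesis by simp
  qed
  ultimately show ?case using d1 d2 d_def by (intro exI[of _ d]) auto
qed

locale GCset =
  fixes k :: "nat list" and n :: nat and lam :: "nat \<Rightarrow> real" and e :: "nat \<times> nat \<Rightarrow> 'd::finite"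
  assumes n_def: "n = sum_list k" and lt: "lambda_of_type k lam" and inj: "inj_on e (GC_index n)"
begin

abbreviation "PP \<equiv> GC_polytope n lam e"
abbreviation "II \<equiv> GC_index n"
abbreviation "KK \<equiv> II \<times> (UNIV :: bool set)"
abbreviation "YY \<equiv> GC_coord n lam e"
abbreviation "D \<equiv> Dg n lam e"
abbreviation "Dl \<equiv> Dg n (\<lambda>_. 0) e"

definition T :: "real^'d \<Rightarrow> ((nat \<times> nat) \<times> bool) set" where
  "T y = {c \<in> KK. D y c = 0}"

lemma finite_II: "finite II"
proof -
  have "II \<subseteq> {0..n} \<times> {0..n}" unfolding GC_index_def by auto
  then show ?thesis by (rule finite_subset) simp
qed

lemma finite_KK: "finite KK" using finite_II by simp

lemma T_sub: "T y \<subseteq> KK" by (auto simp: T_def)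

lemma P_iff: "y \<in> PP \<longleftrightarrow> (\<forall>t. t \<notin> e ` II \<longrightarrow> y $ t = 0) \<and> (\<forall>c\<in>KK. D y c \<ge> 0)"
  unfolding GC_polytope_def Dg_def nb_def by (auto simp: case_prod_beta)

lemma coord_lin: "GC_coord n lam e (y + (t::real) *\<^sub>R v) p = GC_coord n lam e y p + t * GC_coord n (\<lambda>_. 0) e v p"
  by (simp add: GC_coord_def)

lemma D_lin: "D (y + (t::real) *\<^sub>R v) c = D y c + t * Dl v c"
  unfolding Dg_def coord_lin by (simp add: algebra_simps)

lemma coord_comb: assumes "a + b = 1"
  shows "GC_coord n lam e (a *\<^sub>R y + b *\<^sub>R z) p = a * GC_coord n lam e y p + b * GC_coord n lam e z p"
proof -
  have "a * l + b * l = l" for l :: real using assms by (metis distrib_right mult_1)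
  then show ?thesis by (simp add: GC_coord_def)
qed

lemma D_comb: "a + b = 1 \<Longrightarrow> D (a *\<^sub>R y + b *\<^sub>R z) c = a * D y c + b * D z c"
  unfolding Dg_def coord_comb by (simp add: algebra_simps)

lemma Dl_diff: "Dl (y - z) c = D y c - D z c"
  unfolding Dg_def GC_coord_def by (auto simp: algebra_simps)

definition Fy :: "real^'d \<Rightarrow> (real^'d) set" where
  "Fy y = {z \<in> PP. T y \<subseteq> T z}"

lemma comb_in_P:
  assumes "x \<in> PP" "z \<in> PP" "0 \<le> u" "0 \<le> v" "u + v = 1"
  shows "u *\<^sub>R x + v *\<^sub>R z \<in> PP"
  using assms unfolding P_iff by (auto simp: D_comb)

lemma face_Fy: "Fy y face_of PP"
proof -
  have s1: "Fy y \<subseteq> PP" by (auto simp: Fy_def)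
  have s2: "convex (Fy y)"
  proof (rule convexI)
    fix x z u v assume a0: "x \<in> Fy y" "z \<in> Fy y" "0 \<le> u" "0 \<le> v" "u + v = (1::real)"
    then have a: "x \<in> Fy y" "z \<in> Fy y" "0 \<le> u \<and> 0 \<le> v \<and> u + v = (1::real)" by auto
    then have "u *\<^sub>R x + v *\<^sub>R z \<in> PP" using comb_in_P by (auto simp: Fy_def)
    moreover have "T y \<subseteq> T (u *\<^sub>R x + v *\<^sub>R z)"
    proof
      fix c assume c: "c \<in> T y"
      then have "c \<in> T x" "c \<in> T z" using a by (auto simp: Fy_def)
      then have "D x c = 0" "D z c = 0" "c \<in> KK" by (auto simp: T_def)
      then show "c \<in> T (u *\<^sub>R x + v *\<^sub>R z)" using a(3) by (simp add: T_def D_comb)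
    qed
    ultimately show "u *\<^sub>R x + v *\<^sub>R z \<in> Fy y" by (simp add: Fy_def)
  qed
  have s3: "\<forall>a\<in>PP. \<forall>b\<in>PP. \<forall>x\<in>Fy y. x \<in> open_segment a b \<longrightarrow> a \<in> Fy y \<and> b \<in> Fy y"
  proof (intro ballI impI)
  fix a b x assume a: "a \<in> PP" "b \<in> PP" "x \<in> Fy y" "x \<in> open_segment a b"
  then obtain u where u: "0 < u" "u < 1" "x = (1 - u) *\<^sub>R a + u *\<^sub>R b" by (auto simp: in_segment)
  have "D a c = 0 \<and> D b c = 0" if "c \<in> T y" for c
  proof -
    have c: "c \<in> KK" "D x c = 0" using a(3) that by (auto simp: Fy_def T_def)
    have "D x c = (1 - u) * D a c + u * D b c" using u D_comb[of "1-u" u] by simp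
    moreover have "D a c \<ge> 0" "D b c \<ge> 0" using a(1,2) c(1) by (auto simp: P_iff)
    ultimately show ?thesis using c(2) u
      by (smt (verit, ccfv_SIG) mult_nonneg_nonneg mult_pos_pos)
  qed
  then show "a \<in> Fy y \<and> b \<in> Fy y" using a(1,2) by (auto simp: Fy_def T_def)
  qed
  show ?thesis unfolding face_of_def using s1 s2 s3 by blast
qed

lemma y_in_Fy: "y \<in> PP \<Longrightarrow> y \<in> Fy y" by (simp add: Fy_def)

lemma T_mid:
  assumes "y \<in> PP" "z \<in> PP"
  shows "T ((1/2) *\<^sub>R y + (1/2) *\<^sub>R z) = T y \<inter> T z"
proof -
  have "D ((1/2) *\<^sub>R y + (1/2) *\<^sub>R z) c = 0 \<longleftrightarrow> D y c = 0 \<and> D z c = 0" if "c \<in> KK" for c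
  proof -
    have "D ((1/2) *\<^sub>R y + (1/2) *\<^sub>R z) c = (1/2) * D y c + (1/2) * D z c"
      by (rule D_comb) simp
    moreover have "D y c \<ge> 0" "D z c \<ge> 0" using assms that by (auto simp: P_iff)
    ultimately show ?thesis by linarith
  qed
  then show ?thesis unfolding T_def by blast
qed

lemma rep_exists:
  assumes "F \<subseteq> PP" "convex F" "F \<noteq> {}"
  shows "\<exists>y\<in>F. \<forall>z\<in>F. T y \<subseteq> T z"
proof -
  obtain y0 where "y0 \<in> F" using assms by auto
  then obtain y where y: "y \<in> F" "\<forall>z. z \<in> F \<longrightarrow> card (T y) \<le> card (T z)"
    using ex_has_least_nat[of "\<lambda>z. z \<in> F" y0 "\<lambda>z. card (T z)"] by auto
  have "T y \<subseteq> T z" if z: "z \<in> F" for z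
  proof -
    define m where "m = (1/2) *\<^sub>R y + (1/2) *\<^sub>R z"
    have "m \<in> F" using assms(2) y(1) z unfolding m_def convex_def by auto
    then have "card (T y) \<le> card (T m)" using y by auto
    moreover have "T m = T y \<inter> T z" unfolding m_def using T_mid assms(1) y(1) z by auto
    moreover have "finite (T y)" using T_sub finite_KK finite_subset by blast
    ultimately have "T y \<inter> T z = T y"
      by (metis card_mono card_subset_eq inf_le1 le_antisym)
    then show ?thesis by blast
  qed
  then show ?thesis using y(1) by blast
qed

lemma FC:
  assumes F: "F face_of PP" and y: "y \<in> F" "\<forall>z\<in>F. T y \<subseteq> T z"
  shows "F = Fy y"
proof
  show "F \<subseteq> Fy y" using y F face_of_imp_subset by (fastforce simp: Fy_def)
next
  show "Fy y \<subseteq> F"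
  proof
    fix z assume z: "z \<in> Fy y"
    have yP: "y \<in> PP" using y F face_of_imp_subset by blast
    have zP: "z \<in> PP" "T y \<subseteq> T z" using z by (auto simp: Fy_def)
    show "z \<in> F"
    proof (cases "z = y")
      case True then show ?thesis using y by simp
    next
      case False
      have pos: "\<forall>c \<in> KK - T y. 0 < D y c" using yP unfolding P_iff T_def
        by (auto simp: less_le)
      obtain d where d: "d > 0" "\<forall>c \<in> KK - T y. 0 < D y c + d * (D y c - D z c)"
        using small_pert[OF _ pos, of "\<lambda>c. D y c - D z c"] finite_KK by blast
      define w where "w = y + d *\<^sub>R (y - z)"
      have Dw: "D w c = D y c + d * (D y c - D z c)" for c
        unfolding w_def D_lin Dl_diff ..
      have wP: "w \<in> PP" unfolding P_iff
      proof (intro conjI allI impI ballI)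
        fix t assume "t \<notin> e ` II"
        then show "w $ t = 0" using yP zP unfolding P_iff w_def by simp
      next
        fix c assume c: "c \<in> KK"
        show "D w c \<ge> 0"
        proof (cases "c \<in> T y")
          case True then have "D y c = 0" "D z c = 0" using zP by (auto simp: T_def)
          then show ?thesis by (simp add: Dw)
        next
          case False then show ?thesis using d c Dw by (metis Diff_iff less_le)
        qed
      qed
      have wz: "w \<noteq> z"
      proof
        assume "w = z"
        then have "(1 + d) *\<^sub>R (y - z) = 0" unfolding w_def by (simp add: algebra_simps)
        then show False using d False by simp
      qed
      have "y = (1 - d/(1+d)) *\<^sub>R w + (d/(1+d)) *\<^sub>R z"
      proof -
        have e1: "(1 - d/(1+d)) = 1/(1+d)" using d by (simp add: field_simps)
        have e2: "d/(1+d) = (1/(1+d)) * d" by simp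
        have "(1 - d/(1+d)) *\<^sub>R w + (d/(1+d)) *\<^sub>R z = (1/(1+d)) *\<^sub>R (w + d *\<^sub>R z)"
          unfolding e1 unfolding e2 by (simp only: scaleR_add_right scaleR_scaleR)
        also have "w + d *\<^sub>R z = (1+d) *\<^sub>R y" unfolding w_def by (simp add: algebra_simps)
        finally show ?thesis using d by simp
      qed
      then have "y \<in> open_segment w z" unfolding in_segment using wz d
        by (intro conjI exI[of _ "d/(1+d)"]) auto
      then show "z \<in> F" using face_ofD[OF F _ wP zP(1) y(1)] by blast
    qed
  qed
qed

end

fun rootf :: "nat \<Rightarrow> (nat \<times> nat \<Rightarrow> real) \<Rightarrow> nat \<times> nat \<Rightarrow> nat \<times> nat" where
  "rootf 0 Yf p = p"
| "rootf (Suc m) Yf p = (if Yf (nb p True) = Yf p then rootf m Yf (nb p True)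
     else if Yf (nb p False) = Yf p then rootf m Yf (nb p False) else p)"

lemma nb_sum[simp]: "fst (nb p dd) + snd (nb p dd) = Suc (fst p + snd p)"
  by (simp add: nb_def)

lemma nb_ge: "1 \<le> fst p \<Longrightarrow> 1 \<le> snd p \<Longrightarrow> 1 \<le> fst (nb p dd) \<and> 1 \<le> snd (nb p dd)"
  by (simp add: nb_def)

context GCset begin

definition Lb :: "(nat \<times> nat) set" where
  "Lb = {p. 1 \<le> fst p \<and> 1 \<le> snd p \<and> fst p + snd p = n + 1}"

definition Cor :: "real^'d \<Rightarrow> (nat \<times> nat) set" where
  "Cor y = {p \<in> II. YY y (nb p True) \<noteq> YY y p \<and> YY y (nb p False) \<noteq> YY y p}"

definition root :: "real^'d \<Rightarrow> nat \<times> nat \<Rightarrow> nat \<times> nat" where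
  "root y p = rootf (n + 1 - (fst p + snd p)) (YY y) p"

lemma II_iff: "p \<in> II \<longleftrightarrow> 1 \<le> fst p \<and> 1 \<le> snd p \<and> fst p + snd p \<le> n"
  by (cases p) (auto simp: GC_index_def)

lemma Cor_II: "Cor y \<subseteq> II" by (auto simp: Cor_def)

lemma Lb_II: "p \<in> Lb \<Longrightarrow> p \<notin> II" by (auto simp: Lb_def II_iff)

lemma rootf_range:
  "1 \<le> fst p \<Longrightarrow> 1 \<le> snd p \<Longrightarrow> fst p + snd p + m = n + 1 \<Longrightarrow> rootf m (YY y) p \<in> Cor y \<union> Lb"
proof (induction m arbitrary: p)
  case 0 then show ?case by (auto simp: Lb_def)
next
  case (Suc m)
  have pI: "p \<in> II" using Suc.prems by (auto simp: II_iff)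
  show ?case
    using Suc.IH[of "nb p True"] Suc.IH[of "nb p False"] nb_ge[OF Suc.prems(1,2)] Suc.prems(3) pI
    by (auto simp: Cor_def)
qed

lemma root_range: "p \<in> II \<union> Lb \<Longrightarrow> root y p \<in> Cor y \<union> Lb"
  unfolding root_def by (rule rootf_range) (auto simp: II_iff Lb_def)

lemma root_Cor: "p \<in> Cor y \<Longrightarrow> root y p = p"
proof -
  assume p: "p \<in> Cor y"
  then have "p \<in> II" by (auto simp: Cor_def)
  then obtain m where m: "n + 1 - (fst p + snd p) = Suc m" by (auto simp: II_iff intro: that[of "n - (fst p + snd p)"])
  show ?thesis unfolding root_def m using p by (simp add: Cor_def)
qed

lemma root_Lb: "p \<in> Lb \<Longrightarrow> root y p = p"
  by (auto simp: root_def Lb_def)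

definition W :: "real^'d \<Rightarrow> (real^'d) set" where
  "W y = {v. (\<forall>t. t \<notin> e ` II \<longrightarrow> v $ t = 0) \<and> (\<forall>c\<in>T y. Dl v c = 0)}"

abbreviation "VX \<equiv> GC_coord n (\<lambda>_. 0) e"

lemma D_eq0_iff: "D y (p, dd) = 0 \<longleftrightarrow> YY y (nb p dd) = YY y p"
  by (cases dd) (auto simp: Dg_def)

lemma Dl_eq0_iff: "Dl v (p, dd) = 0 \<longleftrightarrow> VX v (nb p dd) = VX v p"
  by (cases dd) (auto simp: Dg_def)

lemma rootf_val:
  assumes "v \<in> W y"
  shows "1 \<le> fst p \<Longrightarrow> 1 \<le> snd p \<Longrightarrow> fst p + snd p + m = n + 1 \<Longrightarrow> VX v p = VX v (rootf m (YY y) p)"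
proof (induction m arbitrary: p)
  case 0 then show ?case by simp
next
  case (Suc m)
  have pI: "p \<in> II" using Suc.prems by (auto simp: II_iff)
  have W: "(p,dd) \<in> T y \<Longrightarrow> VX v (nb p dd) = VX v p" for dd
    using assms Dl_eq0_iff unfolding W_def by blast
  have T: "YY y (nb p dd) = YY y p \<Longrightarrow> (p,dd) \<in> T y" for dd
    using pI D_eq0_iff unfolding T_def by blast
  show ?case
    using Suc.IH[of "nb p True"] Suc.IH[of "nb p False"] nb_ge[OF Suc.prems(1,2)] Suc.prems(3) W T
    by auto
qed

lemma root_val: "v \<in> W y \<Longrightarrow> p \<in> II \<Longrightarrow> VX v p = VX v (root y p)"
  unfolding root_def by (rule rootf_val) (auto simp: II_iff)

lemma D_ge: "y \<in> PP \<Longrightarrow> p \<in> II \<Longrightarrow> D y (p, dd) \<ge> 0"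
  by (auto simp: P_iff)

lemma rootf_adj:
  assumes yP: "y \<in> PP"
  shows "p \<in> II \<Longrightarrow> fst p + snd p + Suc m = n + 1 \<Longrightarrow> YY y (nb p dd) = YY y p \<Longrightarrow>
     rootf (Suc m) (YY y) p = rootf m (YY y) (nb p dd) \<or>
     (rootf (Suc m) (YY y) p \<in> Lb \<and> rootf m (YY y) (nb p dd) \<in> Lb)"
proof (induction m arbitrary: p dd)
  case 0
  have "nb p True \<in> Lb" "nb p False \<in> Lb" using 0 by (auto simp: Lb_def nb_def II_iff)
  then show ?case using 0(3) by (cases dd) auto
next
  case (Suc m)
  show ?case
  proof (cases dd)
    case True then show ?thesis using Suc.prems by simp
  next
    case False
    show ?thesis
    proof (cases "YY y (nb p True) = YY y p")
      case NW: True
      obtain i j where p: "p = (i,j)" by fastforce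
      have NWI: "(i, Suc j) \<in> II" "(Suc i, j) \<in> II" using Suc.prems p by (auto simp: II_iff)
      have "D y ((i, Suc j), False) \<ge> 0" "D y ((Suc i, j), True) \<ge> 0"
        using D_ge[OF yP NWI(1)] D_ge[OF yP NWI(2)] by auto
      then have r1: "YY y (Suc i, Suc j) \<le> YY y (i, Suc j)" "YY y (Suc i, j) \<le> YY y (Suc i, Suc j)"
        by (auto simp: Dg_def nb_def)
      have eqs: "YY y (i, Suc j) = YY y (i,j)" "YY y (Suc i, j) = YY y (i,j)"
        using NW Suc.prems(3) False p by (auto simp: nb_def)
      then have r: "YY y (Suc i, Suc j) = YY y (Suc i, j)" "YY y (Suc i, Suc j) = YY y (i, Suc j)"
        using r1 by linarith+
      have A: "rootf (Suc (Suc m)) (YY y) p = rootf (Suc m) (YY y) (i, Suc j)"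
        using NW p by (simp add: nb_def)
      have B: "rootf (Suc m) (YY y) (Suc i, j) = rootf m (YY y) (Suc i, Suc j)"
        using r by (simp add: nb_def)
      have IH: "rootf (Suc m) (YY y) (i, Suc j) = rootf m (YY y) (Suc i, Suc j) \<or>
         (rootf (Suc m) (YY y) (i, Suc j) \<in> Lb \<and> rootf m (YY y) (Suc i, Suc j) \<in> Lb)"
        using Suc.IH[of "(i, Suc j)" False] NWI(1) Suc.prems(2) p r by (simp add: nb_def)
      show ?thesis using A B IH False p by (simp add: nb_def)
    next
      case NW: False
      then show ?thesis using Suc.prems False by simp
    qed
  qed
qed

lemma root_adj:
  assumes "y \<in> PP" "p \<in> II" "YY y (nb p dd) = YY y p"
  shows "root y p = root y (nb p dd) \<or> (root y p \<in> Lb \<and> root y (nb p dd) \<in> Lb)"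
proof -
  define m where "m = n - (fst p + snd p)"
  have m: "fst p + snd p + Suc m = n + 1" using assms(2) by (auto simp: m_def II_iff)
  have f1: "n + 1 - (fst p + snd p) = Suc m" using m by linarith
  have f2: "n + 1 - (fst (nb p dd) + snd (nb p dd)) = m" using m by simp
  have "root y p = rootf (Suc m) (YY y) p" "root y (nb p dd) = rootf m (YY y) (nb p dd)"
    unfolding root_def f1 f2 by simp_all
  then show ?thesis using rootf_adj[OF assms(1,2) m assms(3)] by simp
qed

end

context GCset begin

definition bv :: "real^'d \<Rightarrow> nat \<times> nat \<Rightarrow> real^'d" where
  "bv y c = (\<chi> t. if \<exists>p\<in>II. e p = t \<and> root y p = c then 1 else 0)"

lemma bv_e: "p \<in> II \<Longrightarrow> bv y c $ e p = (if root y p = c then 1 else 0)"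
  using inj unfolding bv_def by (auto simp: inj_on_def)

lemma bv_out: "t \<notin> e ` II \<Longrightarrow> bv y c $ t = 0"
  unfolding bv_def by auto

lemma VX_II: "p \<in> II \<Longrightarrow> VX v p = v $ e p"
  by (auto simp: GC_coord_def II_iff)

lemma VX_Lb: "p \<in> Lb \<Longrightarrow> VX v p = 0"
  by (auto simp: GC_coord_def Lb_def)

lemma Dl_add: "Dl (u + v) c = Dl u c + Dl v c"
  by (auto simp: Dg_def GC_coord_def)

lemma Dl_scale: "Dl (a *\<^sub>R v) c = a * Dl v c"
  by (auto simp: Dg_def GC_coord_def algebra_simps)

lemma Dl_zero: "Dl 0 c = 0"
  by (auto simp: Dg_def GC_coord_def)

lemma subspace_W: "subspace (W y)"
  unfolding subspace_def W_def by (auto simp: Dl_add Dl_scale Dl_zero)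

lemma nb_box: "p \<in> II \<Longrightarrow> nb p dd \<in> II \<union> Lb"
  by (cases dd) (auto simp: II_iff Lb_def nb_def)

lemma bv_W: assumes "y \<in> PP" "c \<in> Cor y" shows "bv y c \<in> W y"
  unfolding W_def
proof (intro CollectI conjI allI impI ballI)
  fix t assume "t \<notin> e ` II" then show "bv y c $ t = 0" by (rule bv_out)
next
  fix cc assume cc: "cc \<in> T y"
  obtain p dd where pdd: "cc = (p,dd)" by fastforce
  have pI: "p \<in> II" and eq: "YY y (nb p dd) = YY y p" using cc pdd by (auto simp: T_def D_eq0_iff)
  have cI1: "c \<in> II" using assms(2) Cor_II by blast
  then have cI: "c \<in> II" "c \<notin> Lb" using Lb_II[of c] by auto
  have ra: "root y p = root y (nb p dd) \<or> (root y p \<in> Lb \<and> root y (nb p dd) \<in> Lb)"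
    by (rule root_adj[OF assms(1) pI eq])
  have "VX (bv y c) (nb p dd) = VX (bv y c) p"
  proof (cases "nb p dd \<in> Lb")
    case True
    then have "root y p \<in> Lb" using ra root_Lb by metis
    then show ?thesis using True VX_Lb VX_II[OF pI] bv_e[OF pI] cI by auto
  next
    case False
    then have qI: "nb p dd \<in> II" using nb_box[OF pI] by auto
    show ?thesis using ra VX_II[OF pI] VX_II[OF qI] bv_e[OF pI] bv_e[OF qI] cI by auto
  qed
  then show "Dl (bv y c) cc = 0" using pdd Dl_eq0_iff by simp
qed

lemma bv_self: assumes "c \<in> Cor y" shows "bv y c $ e c = 1"
proof -
  have "c \<in> II" using assms Cor_II by blast
  then show ?thesis using bv_e[of c y c] root_Cor[OF assms] by simp
qed

lemma bv_other: assumes "c \<in> Cor y" "c' \<in> Cor y" "c \<noteq> c'" shows "bv y c' $ e c = 0"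
proof -
  have "c \<in> II" using assms Cor_II by blast
  then show ?thesis using bv_e[of c y c'] root_Cor[OF assms(1)] assms(3) by simp
qed

lemma bv_inj: "inj_on (bv y) (Cor y)"
proof (rule inj_onI)
  fix c c' assume a: "c \<in> Cor y" "c' \<in> Cor y" "bv y c = bv y c'"
  show "c = c'"
  proof (rule ccontr)
    assume "c \<noteq> c'"
    then have "bv y c' $ e c = 0" using bv_other a by blast
    moreover have "bv y c $ e c = 1" using bv_self a by blast
    ultimately show False using a(3) by simp
  qed
qed

lemma bv_orth: assumes "c \<noteq> c'" shows "orthogonal (bv y c) (bv y c')"
proof -
  have "bv y c $ t * bv y c' $ t = 0" for t
  proof (cases "t \<in> e ` II")
    case True
    then obtain p where "p \<in> II" "t = e p" by auto
    then show ?thesis using bv_e assms by auto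
  next
    case False then show ?thesis using bv_out by simp
  qed
  then have "(\<Sum>i\<in>UNIV. bv y c $ i * bv y c' $ i) = 0" by (intro sum.neutral) auto
  then show ?thesis unfolding orthogonal_def inner_vec_def by simp
qed

lemma bv_indep: "independent (bv y ` Cor y)"
proof (rule pairwise_orthogonal_independent)
  show "pairwise orthogonal (bv y ` Cor y)"
    unfolding pairwise_def
  proof (intro ballI impI)
    fix x z assume "x \<in> bv y ` Cor y" "z \<in> bv y ` Cor y" "x \<noteq> z"
    then obtain c c' where "x = bv y c" "z = bv y c'" "c \<noteq> c'" by blast
    then show "orthogonal x z" using bv_orth by simp
  qed
  show "0 \<notin> bv y ` Cor y" using bv_self by fastforce
qed

lemma finite_Cor: "finite (Cor y)" using finite_II Cor_II finite_subset by blast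

lemma W_span: assumes "y \<in> PP" shows "W y \<subseteq> span (bv y ` Cor y)"
proof
  fix v assume v: "v \<in> W y"
  have "v = (\<Sum>c\<in>Cor y. (v $ e c) *\<^sub>R bv y c)"
  unfolding vec_eq_iff
  proof (rule allI)
    fix t
    show "v $ t = (\<Sum>c\<in>Cor y. (v $ e c) *\<^sub>R bv y c) $ t"
    proof (cases "t \<in> e ` II")
      case False then show ?thesis using v bv_out by (simp add: W_def)
    next
      case True
      then obtain p where p: "p \<in> II" "t = e p" by auto
      have rr: "root y p \<in> Cor y \<union> Lb" using root_range p by auto
      have "(\<Sum>c\<in>Cor y. (v $ e c) *\<^sub>R bv y c) $ t = (\<Sum>c\<in>Cor y. (v $ e c) * (if root y p = c then 1 else 0))"
        using p bv_e by simp
      also have "\<dots> = (if root y p \<in> Cor y then v $ e (root y p) else 0)"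
        using finite_Cor by (simp add: sum.delta' if_distrib cong: if_cong)
      also have "\<dots> = VX v (root y p)"
      proof (cases "root y p \<in> Cor y")
        case True
        then have "root y p \<in> II" using Cor_II by blast
        then show ?thesis using True VX_II[of "root y p" v] by simp
      next
        case False
        then have "root y p \<in> Lb" using rr by blast
        then show ?thesis using False VX_Lb[of "root y p" v] by simp
      qed
      also have "\<dots> = VX v p" using root_val[OF v p(1)] by simp
      also have "\<dots> = v $ t" using VX_II p by simp
      finally show ?thesis by simp
    qed
  qed
  also have "\<dots> \<in> span (bv y ` Cor y)"
    by (intro span_sum span_scale span_base) auto
  finally show "v \<in> span (bv y ` Cor y)" .
qed

lemma dim_W: assumes "y \<in> PP" shows "dim (W y) = card (Cor y)"
proof (rule dim_unique[OF _ W_span[OF assms] bv_indep])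
  show "bv y ` Cor y \<subseteq> W y" using bv_W[OF assms] by auto
  show "card (bv y ` Cor y) = card (Cor y)" using bv_inj card_image by blast
qed

lemma span_Fy: assumes yP: "y \<in> PP" shows "span ((+) (- y) ` Fy y) = W y"
proof
  show "span ((+) (- y) ` Fy y) \<subseteq> W y"
  proof (rule span_minimal[OF _ subspace_W])
    show "(+) (- y) ` Fy y \<subseteq> W y"
    proof
      fix x assume "x \<in> (+) (- y) ` Fy y"
      then obtain z where z: "z \<in> Fy y" "x = z - y" by auto
      have zP: "z \<in> PP" "T y \<subseteq> T z" using z by (auto simp: Fy_def)
      show "x \<in> W y" unfolding W_def
      proof (intro CollectI conjI allI impI ballI)
        fix t assume "t \<notin> e ` II" then show "x $ t = 0" using zP yP z by (simp add: P_iff)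
      next
        fix c assume c: "c \<in> T y"
        then have "D y c = 0" "D z c = 0" using zP by (auto simp: T_def)
        then show "Dl x c = 0" using z Dl_diff by simp
      qed
    qed
  qed
next
  show "W y \<subseteq> span ((+) (- y) ` Fy y)"
  proof
    fix v assume v: "v \<in> W y"
    have pos: "\<forall>c \<in> KK - T y. 0 < D y c" using yP unfolding P_iff T_def by (auto simp: less_le)
    obtain d where d: "d > 0" "\<forall>c \<in> KK - T y. 0 < D y c + d * Dl v c"
      using small_pert[OF _ pos, of "\<lambda>c. Dl v c"] finite_KK by blast
    define w where "w = y + d *\<^sub>R v"
    have Dw: "D w c = D y c + d * Dl v c" for c unfolding w_def D_lin ..
    have wP: "w \<in> PP" unfolding P_iff
    proof (intro conjI allI impI ballI)
      fix t assume "t \<notin> e ` II"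
      then show "w $ t = 0" using yP v unfolding P_iff W_def w_def by simp
    next
      fix c assume c: "c \<in> KK"
      show "D w c \<ge> 0"
      proof (cases "c \<in> T y")
        case True then have "D y c = 0" "Dl v c = 0" using v by (auto simp: T_def W_def)
        then show ?thesis by (simp add: Dw)
      next
        case False then show ?thesis using d c Dw by (metis Diff_iff less_le)
      qed
    qed
    have "T y \<subseteq> T w"
    proof
      fix c assume c: "c \<in> T y"
      then have "D y c = 0" "Dl v c = 0" using v by (auto simp: T_def W_def)
      then show "c \<in> T w" using c by (simp add: T_def Dw)
    qed
    then have "w \<in> Fy y" using wP by (simp add: Fy_def)
    then have "d *\<^sub>R v \<in> (+) (- y) ` Fy y" unfolding w_def by (intro image_eqI[of _ _ "y + d *\<^sub>R v"]) auto
    then have "(1/d) *\<^sub>R (d *\<^sub>R v) \<in> span ((+) (- y) ` Fy y)" by (intro span_scale span_base)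
    then show "v \<in> span ((+) (- y) ` Fy y)" using d by simp
  qed
qed

lemma aff_dim_Fy: assumes "y \<in> PP" shows "aff_dim (Fy y) = int (card (Cor y))"
proof -
  have "y \<in> affine hull (Fy y)" using y_in_Fy[OF assms] by (simp add: hull_inc)
  then have "aff_dim (Fy y) = int (dim ((+) (- y) ` Fy y))" by (rule aff_dim_eq_dim)
  also have "dim ((+) (- y) ` Fy y) = dim (W y)" using span_Fy[OF assms] dim_span by metis
  finally show ?thesis using dim_W[OF assms] by simp
qed

end

definition hEs :: "nat \<Rightarrow> ((nat \<times> nat) \<times> bool) set \<Rightarrow> nat \<times> nat \<Rightarrow> bool" where
  "hEs n TT v \<longleftrightarrow> 1 \<le> fst v \<and> fst v + snd v \<le> n \<and> (snd v = 0 \<or> (v, True) \<notin> TT)"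

definition vEs :: "nat \<Rightarrow> ((nat \<times> nat) \<times> bool) set \<Rightarrow> nat \<times> nat \<Rightarrow> bool" where
  "vEs n TT v \<longleftrightarrow> 1 \<le> snd v \<and> fst v + snd v \<le> n \<and> (fst v = 0 \<or> (v, False) \<notin> TT)"

definition Es :: "nat \<Rightarrow> ((nat \<times> nat) \<times> bool) set \<Rightarrow> (vtx \<times> vtx) set" where
  "Es n TT = {((a,b),(Suc a,b)) | a b. hEs n TT (Suc a, b)} \<union> {((a,b),(a,Suc b)) | a b. vEs n TT (a, Suc b)}"

definition Gs :: "nat \<Rightarrow> ((nat \<times> nat) \<times> bool) set \<Rightarrow> graph" where
  "Gs n TT = (insert (0,0) (snd ` Es n TT), Es n TT)"

lemma snd_Es: "snd ` Es n TT = {v. hEs n TT v} \<union> {v. vEs n TT v}"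
proof (intro set_eqI iffI)
  fix v assume "v \<in> snd ` Es n TT"
  then show "v \<in> {v. hEs n TT v} \<union> {v. vEs n TT v}" unfolding Es_def by auto
next
  fix v assume v: "v \<in> {v. hEs n TT v} \<union> {v. vEs n TT v}"
  obtain a b where ab: "v = (a,b)" by fastforce
  show "v \<in> snd ` Es n TT"
  proof (cases "hEs n TT v")
    case True
    then obtain a' where "a = Suc a'" using ab by (cases a) (auto simp: hEs_def)
    then show ?thesis using True ab unfolding Es_def by (intro image_eqI[of _ _ "((a',b),(a,b))"]) auto
  next
    case False
    then have "vEs n TT v" using v by auto
    then obtain b' where "b = Suc b'" using ab by (cases b) (auto simp: vEs_def)
    then show ?thesis using \<open>vEs n TT v\<close> ab unfolding Es_def by (intro image_eqI[of _ _ "((a,b'),(a,b))"]) auto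
  qed
qed

lemma origin_notin: "(0,0) \<notin> snd ` Es n TT"
  unfolding snd_Es by (auto simp: hEs_def vEs_def)

lemma finite_hv: "finite {v. hEs n TT v}" "finite {v. vEs n TT v}"
proof -
  have "{v. hEs n TT v} \<subseteq> {0..n} \<times> {0..n}" "{v. vEs n TT v} \<subseteq> {0..n} \<times> {0..n}"
    by (auto simp: hEs_def vEs_def)
  then show "finite {v. hEs n TT v}" "finite {v. vEs n TT v}" by (auto intro: finite_subset)
qed

lemma card_Es: "card (Es n TT) = card {v. hEs n TT v} + card {v. vEs n TT v}"
proof -
  define A where "A = {((a,b),(Suc a,b)) | a b. hEs n TT (Suc a, b)}"
  define B where "B = {((a,b),(a,Suc b)) | a b. vEs n TT (a, Suc b)}"
  have A: "A = (\<lambda>v. ((fst v - 1, snd v), v)) ` {v. hEs n TT v}"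
  proof (intro set_eqI iffI)
    fix x assume "x \<in> A" then show "x \<in> (\<lambda>v. ((fst v - 1, snd v), v)) ` {v. hEs n TT v}"
      unfolding A_def by (fastforce simp: image_iff)
  next
    fix x assume "x \<in> (\<lambda>v. ((fst v - 1, snd v), v)) ` {v. hEs n TT v}"
    then obtain v where v: "hEs n TT v" "x = ((fst v - 1, snd v), v)" by auto
    then obtain a where "fst v = Suc a" by (cases "fst v") (auto simp: hEs_def)
    then show "x \<in> A" unfolding A_def using v by (cases v) auto
  qed
  have B: "B = (\<lambda>v. ((fst v, snd v - 1), v)) ` {v. vEs n TT v}"
  proof (intro set_eqI iffI)
    fix x assume "x \<in> B" then show "x \<in> (\<lambda>v. ((fst v, snd v - 1), v)) ` {v. vEs n TT v}"
      unfolding B_def by (fastforce simp: image_iff)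
  next
    fix x assume "x \<in> (\<lambda>v. ((fst v, snd v - 1), v)) ` {v. vEs n TT v}"
    then obtain v where v: "vEs n TT v" "x = ((fst v, snd v - 1), v)" by auto
    then obtain b where "snd v = Suc b" by (cases "snd v") (auto simp: vEs_def)
    then show "x \<in> B" unfolding B_def using v by (cases v) auto
  qed
  have cA: "card A = card {v. hEs n TT v}" unfolding A by (rule card_image) (auto simp: inj_on_def)
  have cB: "card B = card {v. vEs n TT v}" unfolding B by (rule card_image) (auto simp: inj_on_def)
  have "A \<inter> B = {}" unfolding A_def B_def by auto
  moreover have "finite A" "finite B" unfolding A B using finite_hv by auto
  ultimately have "card (A \<union> B) = card A + card B" by (rule card_Un_disjoint[rotated 2])
  then show ?thesis using cA cB by (simp add: Es_def A_def B_def)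
qed

lemma card_V: "card (insert (0,0) (snd ` Es n TT)) = 1 + card {v. hEs n TT v} + card {v. vEs n TT v}
   - card ({v. hEs n TT v} \<inter> {v. vEs n TT v})"
proof -
  have "card (insert (0,0) (snd ` Es n TT)) = 1 + card (snd ` Es n TT)"
    using origin_notin finite_hv by (simp add: snd_Es)
  moreover have "card ({v. hEs n TT v} \<union> {v. vEs n TT v}) + card ({v. hEs n TT v} \<inter> {v. vEs n TT v})
     = card {v. hEs n TT v} + card {v. vEs n TT v}"
    using finite_hv card_Un_Int by metis
  ultimately show ?thesis by (simp add: snd_Es)
qed

lemma graph_dim_Gs:
  assumes "num_components (Gs n TT) = 1"
  shows "graph_dim (Gs n TT) = int (card ({v. hEs n TT v} \<inter> {v. vEs n TT v}))"
proof -
  have "card ({v. hEs n TT v} \<inter> {v. vEs n TT v}) \<le> card {v. hEs n TT v}"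
    using finite_hv by (intro card_mono) auto
  then show ?thesis
    using assms card_Es[of n TT] card_V[of n TT] unfolding graph_dim_def Gs_def by simp
qed


context GCset begin

abbreviation "ps \<equiv> partial_sum k"

lemma n_ps: "ps (length k) = n" using n_def by (simp add: ps_len)

lemma lam_step:
  assumes "c < n" "\<forall>l. c \<noteq> ps l"
  shows "lam c = lam (Suc c)"
proof -
  obtain l where l: "l < length k" "ps l \<le> c" "c < ps (Suc l)"
    using ps_find[of c k "length k"] assms(1) n_ps by auto
  have "ps l < c" using l(2) assms(2) le_neq_implies_less by blast
  have A: "\<forall>i. ps l < i \<and> i \<le> ps (Suc l) \<longrightarrow> lam i = lam (ps (Suc l))"
    using lt l(1) unfolding lambda_of_type_def by blast
  have "lam c = lam (ps (Suc l))" using A[rule_format, of c] \<open>ps l < c\<close> l(3) by linarith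
  moreover have "lam (Suc c) = lam (ps (Suc l))" using A[rule_format, of "Suc c"] \<open>ps l < c\<close> l(3) by linarith
  ultimately show ?thesis by simp
qed

lemma lam_strict:
  assumes "c = ps l" "1 \<le> c" "c < n"
  shows "lam (Suc c) < lam c"
proof -
  have "l < length k" using assms n_def ps_len[of k l] by (cases "l < length k") auto
  moreover have "l \<noteq> 0"
  proof
    assume "l = 0" then have "c = 0" using assms(1) by simp
    then show False using assms(2) by simp
  qed
  ultimately obtain l' where "l = Suc l'" "Suc l' < length k" by (cases l) auto
  moreover have "\<forall>l. Suc l < length k \<longrightarrow> lam (ps (Suc l)) > lam (ps (Suc l) + 1)"
    using lt unfolding lambda_of_type_def by blast
  ultimately show ?thesis using assms(1) by auto
qed

lemma T_iff: "p \<in> II \<Longrightarrow> (p,dd) \<in> T y \<longleftrightarrow> YY y (nb p dd) = YY y p"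
  by (auto simp: T_def D_eq0_iff)

lemma hE_iff: "1 \<le> a \<Longrightarrow> 1 \<le> b \<Longrightarrow> a + b \<le> n \<Longrightarrow> hEs n (T y) (a,b) \<longleftrightarrow> YY y (a, Suc b) \<noteq> YY y (a,b)"
  using T_iff[of "(a,b)" True y] by (auto simp: hEs_def II_iff nb_def)

lemma vE_iff: "1 \<le> a \<Longrightarrow> 1 \<le> b \<Longrightarrow> a + b \<le> n \<Longrightarrow> vEs n (T y) (a,b) \<longleftrightarrow> YY y (a,b) \<noteq> YY y (Suc a, b)"
  using T_iff[of "(a,b)" False y] by (auto simp: vEs_def II_iff nb_def)

lemma hE_axis: "hEs n TT (a,0) \<longleftrightarrow> 1 \<le> a \<and> a \<le> n" by (auto simp: hEs_def)
lemma vE_axis: "vEs n TT (0,b) \<longleftrightarrow> 1 \<le> b \<and> b \<le> n" by (auto simp: vEs_def)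

lemma mono_Y: "y \<in> PP \<Longrightarrow> 1 \<le> a \<Longrightarrow> 1 \<le> b \<Longrightarrow> a + b \<le> n \<Longrightarrow>
   YY y (a,b) \<le> YY y (a, Suc b) \<and> YY y (Suc a, b) \<le> YY y (a,b)"
  using D_ge[of y "(a,b)" True] D_ge[of y "(a,b)" False] by (auto simp: Dg_def nb_def II_iff)

lemma Y_lam: "a + b = n + 1 \<Longrightarrow> YY y (a,b) = lam a"
  by (simp add: GC_coord_def)

lemma Cor_hv: "{v. hEs n (T y) v} \<inter> {v. vEs n (T y) v} = Cor y"
proof (intro set_eqI iffI)
  fix v assume v: "v \<in> {v. hEs n (T y) v} \<inter> {v. vEs n (T y) v}"
  obtain a b where ab: "v = (a,b)" by fastforce
  have r: "1 \<le> a" "1 \<le> b" "a + b \<le> n" using v ab by (auto simp: hEs_def vEs_def)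
  then show "v \<in> Cor y" using v ab hE_iff[OF r] vE_iff[OF r] by (auto simp: Cor_def II_iff nb_def)
next
  fix v assume v: "v \<in> Cor y"
  obtain a b where ab: "v = (a,b)" by fastforce
  have r: "1 \<le> a" "1 \<le> b" "a + b \<le> n" using v ab by (auto simp: Cor_def II_iff)
  then show "v \<in> {v. hEs n (T y) v} \<inter> {v. vEs n (T y) v}"
    using v ab hE_iff[OF r] vE_iff[OF r] by (auto simp: Cor_def nb_def)
qed

abbreviation "VV y \<equiv> insert (0,0) (snd ` Es n (T y))"
abbreviation "EE y \<equiv> Es n (T y)"

lemma VV_iff: "v \<in> VV y \<longleftrightarrow> v = (0,0) \<or> hEs n (T y) v \<or> vEs n (T y) v"
  by (auto simp: snd_Es)

lemma VV_sum: "v \<in> VV y \<Longrightarrow> fst v + snd v \<le> n"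
proof -
  assume "v \<in> VV y"
  then have "v = (0,0) \<or> hEs n (T y) v \<or> vEs n (T y) v" using VV_iff[of v y] by blast
  then show ?thesis by (auto simp: hEs_def vEs_def)
qed

lemma source_h:
  assumes yP: "y \<in> PP" and h: "hEs n (T y) (Suc a, b)"
  shows "(a,b) \<in> VV y"
proof -
  have s: "Suc a + b \<le> n" using h by (simp add: hEs_def)
  consider "a = 0" | "a \<ge> 1" "b = 0" | "a \<ge> 1" "b \<ge> 1" by linarith
  then show ?thesis
  proof cases
    case 1
    show ?thesis
    proof (cases b)
      case 0 then show ?thesis using 1 by simp
    next
      case (Suc b')
      then have "vEs n (T y) (a,b)" using 1 s by (simp add: vE_axis)
      then show ?thesis using VV_iff[of "(a,b)" y] by blast
    qed
  next
    case 2
    then have "hEs n (T y) (a,b)" using s by (simp add: hE_axis)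
    then show ?thesis using VV_iff[of "(a,b)" y] by blast
  next
    case 3
    have ne: "YY y (Suc a, Suc b) \<noteq> YY y (Suc a, b)" using hE_iff[of "Suc a" b y] h s 3 by simp
    have m1: "YY y (Suc a, Suc b) \<le> YY y (a, Suc b)" using mono_Y[OF yP, of a "Suc b"] 3 s by simp
    have m2: "YY y (Suc a, b) \<le> YY y (Suc a, Suc b)" using mono_Y[OF yP, of "Suc a" b] 3 s by simp
    have "YY y (a, Suc b) \<noteq> YY y (a,b) \<or> YY y (a,b) \<noteq> YY y (Suc a, b)"
      using ne m1 m2 by linarith
    then have "hEs n (T y) (a,b) \<or> vEs n (T y) (a,b)" using hE_iff[of a b y] vE_iff[of a b y] 3 s by auto
    then show ?thesis using VV_iff[of "(a,b)" y] by blast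
  qed
qed

lemma source_v:
  assumes yP: "y \<in> PP" and h: "vEs n (T y) (a, Suc b)"
  shows "(a,b) \<in> VV y"
proof -
  have s: "a + Suc b \<le> n" using h by (simp add: vEs_def)
  consider "b = 0" | "b \<ge> 1" "a = 0" | "a \<ge> 1" "b \<ge> 1" by linarith
  then show ?thesis
  proof cases
    case 1
    show ?thesis
    proof (cases a)
      case 0 then show ?thesis using 1 by simp
    next
      case (Suc a')
      then have "hEs n (T y) (a,b)" using 1 s by (simp add: hE_axis)
      then show ?thesis using VV_iff[of "(a,b)" y] by blast
    qed
  next
    case 2
    then have "vEs n (T y) (a,b)" using s by (simp add: vE_axis)
    then show ?thesis using VV_iff[of "(a,b)" y] by blast
  next
    case 3
    have ne: "YY y (a, Suc b) \<noteq> YY y (Suc a, Suc b)" using vE_iff[of a "Suc b" y] h s 3 by simp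
    have m1: "YY y (Suc a, Suc b) \<le> YY y (a, Suc b)" using mono_Y[OF yP, of a "Suc b"] 3 s by simp
    have m2: "YY y (Suc a, b) \<le> YY y (Suc a, Suc b)" using mono_Y[OF yP, of "Suc a" b] 3 s by simp
    have "YY y (a, Suc b) \<noteq> YY y (a,b) \<or> YY y (a,b) \<noteq> YY y (Suc a, b)"
      using ne m1 m2 by linarith
    then have "hEs n (T y) (a,b) \<or> vEs n (T y) (a,b)" using hE_iff[of a b y] vE_iff[of a b y] 3 s by auto
    then show ?thesis using VV_iff[of "(a,b)" y] by blast
  qed
qed

lemma in_edge:
  assumes yP: "y \<in> PP" and v: "v \<in> VV y" "v \<noteq> (0,0)"
  shows "\<exists>u. (u,v) \<in> EE y \<and> u \<in> VV y \<and> fst u + snd u < fst v + snd v \<and>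
     (v = (Suc (fst u), snd u) \<or> v = (fst u, Suc (snd u)))"
proof -
  obtain a b where ab: "v = (a,b)" by fastforce
  have "hEs n (T y) v \<or> vEs n (T y) v" using v VV_iff[of v y] by blast
  then show ?thesis
  proof
    assume h: "hEs n (T y) v"
    then obtain a' where a': "a = Suc a'" using ab by (cases a) (auto simp: hEs_def)
    have "((a',b),(a,b)) \<in> EE y" using h ab a' by (auto simp: Es_def)
    moreover have "(a',b) \<in> VV y" using source_h[OF yP] h ab a' by simp
    ultimately show ?thesis using ab a' by (intro exI[of _ "(a',b)"]) auto
  next
    assume h: "vEs n (T y) v"
    then obtain b' where b': "b = Suc b'" using ab by (cases b) (auto simp: vEs_def)
    have "((a,b'),(a,b)) \<in> EE y" using h ab b' by (auto simp: Es_def)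
    moreover have "(a,b') \<in> VV y" using source_v[OF yP] h ab b' by simp
    ultimately show ?thesis using ab b' by (intro exI[of _ "(a,b')"]) auto
  qed
qed

lemma edge_VV: "(u,v) \<in> EE y \<Longrightarrow> v \<in> VV y"
  by (intro insertI2 image_eqI[of v snd "(u,v)"]) auto

lemma edge_step: "(u,v) \<in> EE y \<Longrightarrow> v = (Suc (fst u), snd u) \<or> v = (fst u, Suc (snd u))"
  by (auto simp: Es_def)

lemma connected_VV:
  assumes yP: "y \<in> PP"
  shows "v \<in> VV y \<Longrightarrow> ((0,0), v) \<in> (EE y \<union> (EE y)\<inverse>)\<^sup>*"
proof (induction "fst v + snd v" arbitrary: v rule: less_induct)
  case less
  show ?case
  proof (cases "v = (0,0)")
    case True then show ?thesis by simp
  next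
    case False
    then obtain u where u: "(u,v) \<in> EE y" "u \<in> VV y" "fst u + snd u < fst v + snd v"
      using in_edge[OF yP less.prems] by blast
    then have "((0,0), u) \<in> (EE y \<union> (EE y)\<inverse>)\<^sup>*" using less.hyps by blast
    then show ?thesis using u(1) by (meson UnI1 rtrancl.rtrancl_into_rtrancl)
  qed
qed

lemma num_comp:
  assumes yP: "y \<in> PP"
  shows "num_components (Gs n (T y)) = 1"
proof -
  define R where "R = (EE y \<union> (EE y)\<inverse>)\<^sup>*"
  have symR: "(a,b) \<in> R \<Longrightarrow> (b,a) \<in> R" for a b
  proof -
    assume "(a,b) \<in> R"
    then have "(b,a) \<in> ((EE y \<union> (EE y)\<inverse>)\<inverse>)\<^sup>*" unfolding R_def by (rule rtrancl_converseI)
    moreover have "(EE y \<union> (EE y)\<inverse>)\<inverse> = EE y \<union> (EE y)\<inverse>" by (simp add: converse_Un sup_commute)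
    ultimately show "(b,a) \<in> R" unfolding R_def by simp
  qed
  have trR: "(a,b) \<in> R \<Longrightarrow> (b,c) \<in> R \<Longrightarrow> (a,c) \<in> R" for a b c
    unfolding R_def by (rule rtrancl_trans)
  have cls: "R `` {v} = R `` {(0,0)}" if "v \<in> VV y" for v
  proof -
    have o: "((0,0), v) \<in> R" using connected_VV[OF yP that] R_def by simp
    then have o': "(v, (0,0)) \<in> R" by (rule symR)
    show ?thesis
    proof (intro set_eqI iffI)
      fix x assume "x \<in> R `` {v}" then have "(v,x) \<in> R" by simp
      then have "((0,0),x) \<in> R" using trR[OF o] by blast
      then show "x \<in> R `` {(0,0)}" by simp
    next
      fix x assume "x \<in> R `` {(0,0)}" then have "((0,0),x) \<in> R" by simp
      then have "(v,x) \<in> R" using trR[OF o'] by blast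
      then show "x \<in> R `` {v}" by simp
    qed
  qed
  have "VV y // R = {R `` {(0,0)}}"
  proof (intro set_eqI iffI)
    fix X assume "X \<in> VV y // R"
    then obtain v where v: "v \<in> VV y" "X = R `` {v}" unfolding quotient_def by blast
    have "R `` {v} = R `` {(0,0)}" by (rule cls[OF v(1)])
    then show "X \<in> {R `` {(0,0)}}" using v(2) by simp
  next
    fix X assume "X \<in> {R `` {(0,0)}}"
    then show "X \<in> VV y // R" unfolding quotient_def by blast
  qed
  then show ?thesis unfolding num_components_def Gs_def R_def by simp
qed

lemma graph_dim_T: "y \<in> PP \<Longrightarrow> graph_dim (Gs n (T y)) = int (card (Cor y))"
  using graph_dim_Gs[OF num_comp] Cor_hv by simp

end

context GCset begin

lemma terminals_n: "terminals k = {(ps l, n - ps l) | l. l \<le> length k}"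
  unfolding terminals_def n_def ..

lemma ps_lt_len: "ps l < n \<Longrightarrow> l < length k"
  using ps_len[of k l] n_def by (cases "l < length k") auto

lemma out_edge:
  assumes yP: "y \<in> PP" and v: "v \<in> VV y" "v \<notin> terminals k"
  shows "\<exists>w. (v,w) \<in> EE y"
proof -
  obtain a b where ab: "v = (a,b)" by fastforce
  have s: "a + b \<le> n" using VV_sum[OF v(1)] ab by simp
  have hv: "v = (0,0) \<or> hEs n (T y) v \<or> vEs n (T y) v" using VV_iff[of v y] v(1) by blast
  show ?thesis
  proof (cases "a + b < n")
    case True
    consider "b = 0" | "a = 0" "b \<ge> 1" | "a \<ge> 1" "b \<ge> 1" by linarith
    then show ?thesis
    proof cases
      case 1
      then have "hEs n (T y) (Suc a, b)" using True by (simp add: hE_axis)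
      then have "((a,b),(Suc a,b)) \<in> EE y" by (auto simp: Es_def)
      then show ?thesis using ab by blast
    next
      case 2
      then have "vEs n (T y) (a, Suc b)" using True by (simp add: vE_axis)
      then have "((a,b),(a,Suc b)) \<in> EE y" by (auto simp: Es_def)
      then show ?thesis using ab by blast
    next
      case 3
      have in1: "YY y (a, Suc b) \<noteq> YY y (a,b) \<or> YY y (a,b) \<noteq> YY y (Suc a, b)"
        using hv ab 3 hE_iff[of a b y] vE_iff[of a b y] s by auto
      have m: "YY y (a,b) \<le> YY y (a, Suc b)" "YY y (Suc a, b) \<le> YY y (a,b)"
        using mono_Y[OF yP, of a b] 3 s by auto
      have "hEs n (T y) (Suc a, b) \<or> vEs n (T y) (a, Suc b)"
      proof (rule ccontr)
        assume "\<not> ?thesis"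
        then have "YY y (Suc a, Suc b) = YY y (Suc a, b)" "YY y (a, Suc b) = YY y (Suc a, Suc b)"
          using hE_iff[of "Suc a" b y] vE_iff[of a "Suc b" y] 3 True by auto
        then show False using in1 m by linarith
      qed
      then show ?thesis
      proof
        assume "hEs n (T y) (Suc a, b)"
        then have "((a,b),(Suc a,b)) \<in> EE y" by (auto simp: Es_def)
        then show ?thesis using ab by blast
      next
        assume "vEs n (T y) (a, Suc b)"
        then have "((a,b),(a,Suc b)) \<in> EE y" by (auto simp: Es_def)
        then show ?thesis using ab by blast
      qed
    qed
  next
    case False
    then have sn: "a + b = n" using s by simp
    have "v \<in> terminals k"
    proof -
      consider "a = 0" | "b = 0" | "a \<ge> 1" "b \<ge> 1" by linarith
      then show ?thesis
      proof cases
        case 1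
        then show ?thesis unfolding terminals_n using ab sn by (intro CollectI exI[of _ 0]) auto
      next
        case 2
        then show ?thesis unfolding terminals_n using ab sn n_ps by (intro CollectI exI[of _ "length k"]) auto
      next
        case 3
        have in1: "YY y (a, Suc b) \<noteq> YY y (a,b) \<or> YY y (a,b) \<noteq> YY y (Suc a, b)"
          using hv ab 3 hE_iff[of a b y] vE_iff[of a b y] s by auto
        have m: "YY y (a,b) \<le> YY y (a, Suc b)" "YY y (Suc a, b) \<le> YY y (a,b)"
          using mono_Y[OF yP, of a b] 3 s by auto
        have l: "YY y (a, Suc b) = lam a" "YY y (Suc a, b) = lam (Suc a)" using Y_lam sn by auto
        have "lam a \<noteq> lam (Suc a)" using in1 m l by linarith
        then obtain l where "a = ps l" using lam_step[of a] 3 sn by force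
        moreover have "l \<le> length k" using ps_lt_len[of l] \<open>a = ps l\<close> 3 sn by simp
        ultimately show ?thesis unfolding terminals_n using ab sn by auto
      qed
    qed
    then show ?thesis using v(2) by simp
  qed
qed

lemma term_VV:
  assumes yP: "y \<in> PP"
  shows "terminals k \<subseteq> VV y"
proof
  fix v assume "v \<in> terminals k"
  then obtain l where l: "v = (ps l, n - ps l)" "l \<le> length k" unfolding terminals_n by blast
  have le: "ps l \<le> n" using ps_le n_def by simp
  consider "ps l = 0" | "ps l = n" | "1 \<le> ps l" "ps l < n" using le by linarith
  then show "v \<in> VV y"
  proof cases
    case 1
    show ?thesis
    proof (cases "n = 0")
      case True then show ?thesis using l 1 by simp
    next
      case False
      then have "vEs n (T y) v" using l 1 by (simp add: vE_axis)
      then show ?thesis using VV_iff[of v y] by blast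
    qed
  next
    case 2
    show ?thesis
    proof (cases "n = 0")
      case True then show ?thesis using l 2 by simp
    next
      case False
      then have "hEs n (T y) v" using l 2 by (simp add: hE_axis)
      then show ?thesis using VV_iff[of v y] by blast
    qed
  next
    case 3
    define c where "c = ps l"
    have st: "lam (Suc c) < lam c" using lam_strict[of c l] 3 c_def by simp
    have r: "1 \<le> c" "1 \<le> n - c" "c + (n - c) \<le> n" using 3 c_def by auto
    have l1: "YY y (c, Suc (n - c)) = lam c" "YY y (Suc c, n - c) = lam (Suc c)"
      using Y_lam 3 c_def by auto
    have "YY y (c, Suc (n-c)) \<noteq> YY y (c, n-c) \<or> YY y (c, n-c) \<noteq> YY y (Suc c, n-c)"
      using l1 st by auto
    then have "hEs n (T y) v \<or> vEs n (T y) v"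
      using hE_iff[OF r, of y] vE_iff[OF r, of y] l(1) c_def by auto
    then show ?thesis using VV_iff[of v y] by blast
  qed
qed

lemma edge_src:
  assumes yP: "y \<in> PP" and e: "(u,v) \<in> EE y" shows "u \<in> VV y"
  using e source_h[OF yP] source_v[OF yP] by (auto simp: Es_def)

lemma sw_snoc_step: "sw p \<Longrightarrow> last p = u \<Longrightarrow> v = (Suc (fst u), snd u) \<or> v = (fst u, Suc (snd u)) \<Longrightarrow> sw (p @ [v])"
proof -
  assume a: "sw p" "last p = u" "v = (Suc (fst u), snd u) \<or> v = (fst u, Suc (snd u))"
  have l: "last p = (fst u, snd u)" using a(2) by simp
  show ?thesis using a(3) sw.swR[OF a(1) l] sw.swU[OF a(1) l] by blast
qed

lemma bk:
  assumes yP: "y \<in> PP"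
  shows "v \<in> VV y \<Longrightarrow> \<exists>p. sw p \<and> last p = v \<and> set p \<subseteq> VV y \<and> path_edges p \<subseteq> EE y"
proof (induction "fst v + snd v" arbitrary: v rule: less_induct)
  case less
  show ?case
  proof (cases "v = (0,0)")
    case True then show ?thesis by (intro exI[of _ "[(0,0)]"]) (auto intro: sw0)
  next
    case False
    then obtain u where u: "(u,v) \<in> EE y" "u \<in> VV y" "fst u + snd u < fst v + snd v"
       "v = (Suc (fst u), snd u) \<or> v = (fst u, Suc (snd u))"
      using in_edge[OF yP less.prems False] by blast
    have "\<exists>p. sw p \<and> last p = u \<and> set p \<subseteq> VV y \<and> path_edges p \<subseteq> EE y"
      using less.hyps[OF u(3) u(2)] .
    then obtain p where p: "sw p" "last p = u" "set p \<subseteq> VV y" "path_edges p \<subseteq> EE y"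
      by (elim exE conjE) (rule that)
    have ne: "p \<noteq> []" using sw_ne[OF p(1)] by simp
    have "sw (p @ [v])" by (rule sw_snoc_step[OF p(1) p(2) u(4)])
    moreover have "set (p @ [v]) \<subseteq> VV y" using p(3) less.prems by simp
    moreover have "path_edges (p @ [v]) \<subseteq> EE y" unfolding path_edges_snoc[OF ne] using p(2,4) u(1) by blast
    ultimately show ?thesis by (intro exI[of _ "p @ [v]"]) simp
  qed
qed

lemma fw:
  assumes yP: "y \<in> PP"
  shows "sw p \<Longrightarrow> set p \<subseteq> VV y \<Longrightarrow> path_edges p \<subseteq> EE y \<Longrightarrow>
    \<exists>q. sw q \<and> set p \<subseteq> set q \<and> path_edges p \<subseteq> path_edges q \<and> set q \<subseteq> VV y \<and>
        path_edges q \<subseteq> EE y \<and> last q \<in> terminals k"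
proof (induction "n - (fst (last p) + snd (last p))" arbitrary: p rule: less_induct)
  case less
  have ne: "p \<noteq> []" using sw_ne[OF less.prems(1)] by simp
  have lv: "last p \<in> VV y" using less.prems(2) last_in_set[OF ne] by blast
  show ?case
  proof (cases "last p \<in> terminals k")
    case True then show ?thesis using less.prems by (intro exI[of _ p]) simp
  next
    case False
    have "\<exists>w. (last p, w) \<in> EE y" by (rule out_edge[OF yP lv False])
    then obtain w where w: "(last p, w) \<in> EE y" by blast
    have wV: "w \<in> VV y" by (rule edge_VV[OF w])
    have st: "w = (Suc (fst (last p)), snd (last p)) \<or> w = (fst (last p), Suc (snd (last p)))"
      using edge_step[OF w] .
    have swp: "sw (p @ [w])" by (rule sw_snoc_step[OF less.prems(1) refl st])
    have sp: "set (p @ [w]) \<subseteq> VV y" using less.prems(2) wV by simp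
    have ep: "path_edges (p @ [w]) \<subseteq> EE y" unfolding path_edges_snoc[OF ne] using less.prems(3) w by blast
    have "fst w + snd w \<le> n" using VV_sum[OF wV] .
    then have dec: "n - (fst (last (p @ [w])) + snd (last (p @ [w]))) < n - (fst (last p) + snd (last p))"
      using st by auto
    have "\<exists>q. sw q \<and> set (p @ [w]) \<subseteq> set q \<and> path_edges (p @ [w]) \<subseteq> path_edges q \<and>
      set q \<subseteq> VV y \<and> path_edges q \<subseteq> EE y \<and> last q \<in> terminals k"
      by (rule less.hyps[OF dec swp sp ep])
    then obtain q where q: "sw q" "set (p @ [w]) \<subseteq> set q" "path_edges (p @ [w]) \<subseteq> path_edges q"
      "set q \<subseteq> VV y" "path_edges q \<subseteq> EE y" "last q \<in> terminals k"
      by (elim exE conjE) (rule that)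
    have A: "set p \<subseteq> set q" using q(2) by auto
    have B: "path_edges p \<subseteq> path_edges q" using q(3) unfolding path_edges_snoc[OF ne, of w] by blast
    show ?thesis using q(1,4,5,6) A B by (intro exI[of _ q]) simp
  qed
qed

lemma L1:
  assumes yP: "y \<in> PP"
  shows "Gs n (T y) \<in> ladder_faces k"
proof -
  define S where "S = {p. positive_path k p \<and> set p \<subseteq> VV y \<and> path_edges p \<subseteq> EE y}"
  have V: "VV y = (\<Union>p\<in>S. set p)"
  proof
    show "(\<Union>p\<in>S. set p) \<subseteq> VV y" unfolding S_def by auto
    show "VV y \<subseteq> (\<Union>p\<in>S. set p)"
    proof
      fix v assume v: "v \<in> VV y"
      obtain p where p: "sw p" "last p = v" "set p \<subseteq> VV y" "path_edges p \<subseteq> EE y"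
        using bk[OF yP v] by (elim exE conjE) (rule that)
      obtain q where q: "sw q" "set p \<subseteq> set q" "set q \<subseteq> VV y" "path_edges q \<subseteq> EE y" "last q \<in> terminals k"
        using fw[OF yP p(1,3,4)] by (elim exE conjE) (rule that)
      have "positive_path k q" by (rule sw_positive[OF q(1) q(5)])
      then have qS: "q \<in> S" using q(3,4) by (simp add: S_def)
      have "last p \<in> set p" using sw_ne[OF p(1)] by simp
      then have "v \<in> set q" using p(2) q(2) by (metis subsetD)
      then show "v \<in> (\<Union>p\<in>S. set p)" by (rule UN_I[OF qS])
    qed
  qed
  have E: "EE y = (\<Union>p\<in>S. path_edges p)"
  proof
    show "(\<Union>p\<in>S. path_edges p) \<subseteq> EE y" unfolding S_def by auto
    show "EE y \<subseteq> (\<Union>p\<in>S. path_edges p)"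
    proof
      fix x assume x: "x \<in> EE y"
      obtain u v where uv: "x = (u,v)" by (cases x) blast
      have uV: "u \<in> VV y" using edge_src[OF yP] x uv by blast
      obtain p where p: "sw p" "last p = u" "set p \<subseteq> VV y" "path_edges p \<subseteq> EE y"
        using bk[OF yP uV] by (elim exE conjE) (rule that)
      have ne: "p \<noteq> []" using sw_ne[OF p(1)] by simp
      have st: "v = (Suc (fst u), snd u) \<or> v = (fst u, Suc (snd u))" using edge_step x uv by blast
      have swp: "sw (p @ [v])" by (rule sw_snoc_step[OF p(1) p(2) st])
      have sp: "set (p @ [v]) \<subseteq> VV y" using p(3) edge_VV x uv by auto
      have ep: "path_edges (p @ [v]) \<subseteq> EE y" unfolding path_edges_snoc[OF ne] using p(2,4) x uv by blast
      obtain q where q: "sw q" "path_edges (p @ [v]) \<subseteq> path_edges q" "set q \<subseteq> VV y" "path_edges q \<subseteq> EE y" "last q \<in> terminals k"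
        using fw[OF yP swp sp ep] by (elim exE conjE) (rule that)
      have "positive_path k q" by (rule sw_positive[OF q(1) q(5)])
      then have qS: "q \<in> S" using q(3,4) by (simp add: S_def)
      have "x \<in> path_edges (p @ [v])" unfolding path_edges_snoc[OF ne] using p(2) uv by simp
      then have "x \<in> path_edges q" using q(2) by (metis subsetD)
      then show "x \<in> (\<Union>p\<in>S. path_edges p)" by (rule UN_I[OF qS])
    qed
  qed
  have "\<forall>p\<in>S. positive_path k p" by (simp add: S_def)
  then have "terminals k \<subseteq> VV y \<and> (\<exists>S. (\<forall>p\<in>S. positive_path k p) \<and> VV y = (\<Union>p\<in>S. set p) \<and> EE y = (\<Union>p\<in>S. path_edges p))"
    using term_VV[OF yP] V E by blast
  then show ?thesis unfolding ladder_faces_def Gs_def by simp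
qed

end

lemma inL_up: "inL P i j \<Longrightarrow> inL P i (Suc j)"
  unfolding inL_def using less_SucI by blast

lemma inL_left: "sw P \<Longrightarrow> inL P (Suc i) j \<Longrightarrow> inL P i j"
proof -
  assume a: "sw P" "inL P (Suc i) j"
  show ?thesis
  proof (cases i)
    case 0 then show ?thesis by (simp add: inL_def)
  next
    case (Suc i')
    from a(2) obtain b where b: "b < j" "((i,b),(Suc i,b)) \<in> path_edges P" by (auto simp: inL_def)
    then obtain b' where "b' \<le> b" "((i',b'),(Suc i',b')) \<in> path_edges P" using sw_mono[OF a(1), of i' b] Suc by auto
    then show ?thesis using b(1) Suc unfolding inL_def by (intro disjI2 exI[of _ b']) auto
  qed
qed

locale GCface = GCset k n lam e for k n lam and e :: "nat \<times> nat \<Rightarrow> 'd::finite" +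
  fixes S :: "vtx list set"
  assumes S_pos: "\<forall>p\<in>S. positive_path k p"
    and S_term: "terminals k \<subseteq> (\<Union>p\<in>S. set p)"
begin

lemma finite_S: "finite S"
  using finite_positive[of k] S_pos by (metis mem_Collect_eq rev_finite_subset subsetI)

definition cP :: "vtx list \<Rightarrow> nat" where "cP P = fst (last P)"

lemma lastP: assumes "P \<in> S" shows "sw P" "last P = (cP P, n - cP P)" "cP P \<le> n" "last P \<in> terminals k"
proof -
  have "sw P \<and> last P \<in> terminals k" using positive_sw S_pos assms by blast
  then show "sw P" "last P \<in> terminals k" by auto
  then have "fst (last P) + snd (last P) = n" using terminal_sum[of "fst (last P)" "snd (last P)" k] n_def by simp
  then show "last P = (cP P, n - cP P)" "cP P \<le> n" unfolding cP_def by (cases "last P"; auto)+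
qed

lemma cP_ps: assumes "P \<in> S" shows "\<exists>l. cP P = ps l \<and> l \<le> length k"
  using lastP(2,4)[OF assms] unfolding terminals_n by auto

lemma term_path: assumes "(c, n - c) \<in> terminals k" shows "\<exists>Q\<in>S. last Q = (c, n - c)"
proof -
  obtain Q where "Q \<in> S" "(c, n - c) \<in> set Q" using S_term assms by blast
  then show ?thesis using positive_terminal_last[of k Q "(c, n-c)"] S_pos assms by auto
qed

definition Ncnt :: "nat \<Rightarrow> nat" where "Ncnt c = card {Q\<in>S. cP Q = c}"

definition wt :: "vtx list \<Rightarrow> real" where
  "wt P = (if 1 \<le> cP P \<and> cP P < n then (lam (cP P) - lam (Suc (cP P))) / real (Ncnt (cP P)) else 0)"

lemma Ncnt_pos: "P \<in> S \<Longrightarrow> Ncnt (cP P) > 0"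
  unfolding Ncnt_def using finite_S by (auto simp: card_gt_0_iff)

lemma wt_nonneg: assumes "P \<in> S" shows "wt P \<ge> 0"
proof (cases "1 \<le> cP P \<and> cP P < n")
  case True
  obtain l where "cP P = ps l" using cP_ps[OF assms] by blast
  then have "lam (Suc (cP P)) < lam (cP P)" using lam_strict True by blast
  then show ?thesis using True by (simp add: wt_def)
next
  case False then show ?thesis unfolding wt_def by auto
qed

lemma wt_pos: assumes "P \<in> S" "1 \<le> cP P" "cP P < n" shows "wt P > 0"
proof -
  obtain l where "cP P = ps l" using cP_ps[OF assms(1)] by blast
  then have "lam (Suc (cP P)) < lam (cP P)" using lam_strict assms by blast
  then show ?thesis using assms Ncnt_pos[OF assms(1)] by (simp add: wt_def)
qed

definition ind :: "vtx list \<Rightarrow> nat \<Rightarrow> nat \<Rightarrow> real" where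
  "ind P i j = (if inL P i j then 1 else 0)"

definition Zb :: "nat \<Rightarrow> nat \<Rightarrow> real" where
  "Zb i j = lam n + (\<Sum>P\<in>S. wt P * ind P i j)"

lemma Zb_le:
  assumes "\<And>P. P \<in> S \<Longrightarrow> inL P i j \<Longrightarrow> inL P i' j'"
  shows "Zb i j \<le> Zb i' j'"
proof -
  have "wt P * ind P i j \<le> wt P * ind P i' j'" if "P \<in> S" for P
    using wt_nonneg[OF that] assms[OF that] by (auto simp: ind_def)
  then show ?thesis unfolding Zb_def by (simp add: sum_mono)
qed

lemma Zb_neq:
  assumes "\<And>P. P \<in> S \<Longrightarrow> inL P i j \<Longrightarrow> inL P i' j'"
  shows "Zb i' j' \<noteq> Zb i j \<longleftrightarrow> (\<exists>P\<in>S. wt P > 0 \<and> inL P i' j' \<and> \<not> inL P i j)"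
proof -
  define f where "f P = wt P * ind P i' j' - wt P * ind P i j" for P
  have f0: "f P \<ge> 0" if "P \<in> S" for P
    using wt_nonneg[OF that] assms[OF that] by (auto simp: ind_def f_def)
  have "Zb i' j' - Zb i j = (\<Sum>P\<in>S. f P)" unfolding Zb_def f_def by (simp add: sum_subtractf)
  then have "Zb i' j' = Zb i j \<longleftrightarrow> (\<forall>P\<in>S. f P = 0)"
    using sum_nonneg_eq_0_iff[OF finite_S, of f] f0 by auto
  moreover have "f P = 0 \<longleftrightarrow> \<not> (wt P > 0 \<and> inL P i' j' \<and> \<not> inL P i j)" if "P \<in> S" for P
    using wt_nonneg[OF that] assms[OF that] by (auto simp: ind_def f_def)
  ultimately show ?thesis by auto
qed

lemma telesc: "i \<le> m \<Longrightarrow> (\<Sum>c\<in>{i..<m}. lam c - lam (Suc c)) = lam i - lam m"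
proof (induction m)
  case 0 then show ?case by simp
next
  case (Suc m)
  show ?case
  proof (cases "i = Suc m")
    case True then show ?thesis by simp
  next
    case False then have "i \<le> m" using Suc by simp
    then show ?thesis using Suc by (simp add: sum.atLeastLessThan_Suc)
  qed
qed

lemma group_c: assumes "1 \<le> c" "c < n"
  shows "(\<Sum>P\<in>{Q\<in>S. cP Q = c}. wt P) = lam c - lam (Suc c)"
proof (cases "Ncnt c = 0")
  case True
  then have E: "{Q\<in>S. cP Q = c} = {}" unfolding Ncnt_def using finite_S by simp
  have "\<forall>l. c \<noteq> ps l"
  proof (intro allI notI)
    fix l assume cl: "c = ps l"
    then have "l \<le> length k" using ps_lt_len[of l] assms by simp
    then have "(c, n - c) \<in> terminals k" unfolding terminals_n using cl by auto
    then obtain Q where "Q \<in> S" "last Q = (c, n - c)" using term_path by blast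
    then have "Q \<in> {Q\<in>S. cP Q = c}" by (simp add: cP_def)
    then show False using E by simp
  qed
  then have "lam c = lam (Suc c)" using lam_step assms by blast
  then show ?thesis unfolding E by simp
next
  case False
  have "(\<Sum>P\<in>{Q\<in>S. cP Q = c}. wt P) = (\<Sum>P\<in>{Q\<in>S. cP Q = c}. (lam c - lam (Suc c)) / real (Ncnt c))"
    by (rule sum.cong) (use assms in \<open>auto simp: wt_def\<close>)
  also have "\<dots> = real (Ncnt c) * ((lam c - lam (Suc c)) / real (Ncnt c))" by (simp add: Ncnt_def)
  finally show ?thesis using False by simp
qed

lemma inL_lamP: assumes "P \<in> S" "1 \<le> i" "i \<le> n" shows "inL P i (n + 1 - i) \<longleftrightarrow> i \<le> cP P"
proof
  assume a: "inL P i (n + 1 - i)"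
  show "i \<le> cP P"
  proof (rule ccontr)
    assume "\<not> i \<le> cP P"
    then have "fst (last P) < i" using lastP(2)[OF assms(1)] by simp
    then show False using inL_beyond[OF lastP(1)[OF assms(1)]] a by blast
  qed
next
  assume "i \<le> cP P"
  then show "inL P i (n + 1 - i)" using inL_above[OF lastP(1)[OF assms(1)]] lastP(2,3)[OF assms(1)] assms by simp
qed

lemma Zb_lam: assumes "1 \<le> i" "i \<le> n" shows "Zb i (n + 1 - i) = lam i"
proof -
  have "(\<Sum>P\<in>S. wt P * ind P i (n + 1 - i)) = (\<Sum>P\<in>{Q\<in>S. i \<le> cP Q \<and> cP Q < n}. wt P)"
  proof -
    have "(\<Sum>P\<in>S. wt P * ind P i (n + 1 - i)) = (\<Sum>P\<in>S. if i \<le> cP P \<and> cP P < n then wt P else 0)"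
    proof (rule sum.cong[OF refl])
      fix P assume P: "P \<in> S"
      show "wt P * ind P i (n + 1 - i) = (if i \<le> cP P \<and> cP P < n then wt P else 0)"
        using inL_lamP[OF P assms] by (auto simp: ind_def wt_def)
    qed
    also have "\<dots> = (\<Sum>P\<in>{Q\<in>S. i \<le> cP Q \<and> cP Q < n}. wt P)"
      using finite_S by (simp add: sum.inter_filter)
    finally show ?thesis .
  qed
  also have "\<dots> = (\<Sum>c\<in>{i..<n}. \<Sum>P\<in>{Q\<in>{Q\<in>S. i \<le> cP Q \<and> cP Q < n}. cP Q = c}. wt P)"
    by (rule sum.group[symmetric]) (use finite_S in auto)
  also have "\<dots> = (\<Sum>c\<in>{i..<n}. lam c - lam (Suc c))"
  proof (rule sum.cong[OF refl])
    fix c assume c: "c \<in> {i..<n}"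
    have "{Q\<in>{Q\<in>S. i \<le> cP Q \<and> cP Q < n}. cP Q = c} = {Q\<in>S. cP Q = c}" using c by auto
    then show "(\<Sum>P\<in>{Q\<in>{Q\<in>S. i \<le> cP Q \<and> cP Q < n}. cP Q = c}. wt P) = lam c - lam (Suc c)"
      using group_c[of c] c assms by simp
  qed
  also have "\<dots> = lam i - lam n" using telesc assms by simp
  finally show ?thesis unfolding Zb_def by simp
qed

end

lemma sw_set_targets: "sw p \<Longrightarrow> set p \<subseteq> insert (0,0) (snd ` path_edges p)"
proof (induction rule: sw.induct)
  case sw0 then show ?case by simp
next
  case (swR p a b)
  have ne: "p \<noteq> []" using sw_ne[OF swR(1)] by simp
  show ?case using swR.IH unfolding path_edges_snoc[OF ne] by auto
next
  case (swU p a b)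
  have ne: "p \<noteq> []" using sw_ne[OF swU(1)] by simp
  show ?case using swU.IH unfolding path_edges_snoc[OF ne] by auto
qed

context GCface begin

definition xpt :: "real^'d" where
  "xpt = (\<chi> t. if t \<in> e ` II then Zb (fst (inv_into II e t)) (snd (inv_into II e t)) else 0)"

lemma YY_xpt: "p \<in> II \<union> Lb \<Longrightarrow> YY xpt p = Zb (fst p) (snd p)"
proof -
  assume p: "p \<in> II \<union> Lb"
  show ?thesis
  proof (cases "p \<in> II")
    case True
    then have "fst p + snd p \<noteq> n + 1" by (auto simp: II_iff)
    moreover have "inv_into II e (e p) = p" using inv_into_f_f[OF inj True] .
    ultimately show ?thesis using True by (simp add: GC_coord_def xpt_def)
  next
    case False
    then have l: "1 \<le> fst p" "fst p \<le> n" "snd p = n + 1 - fst p" "fst p + snd p = n + 1"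
      using p by (auto simp: Lb_def)
    then show ?thesis using Zb_lam[OF l(1,2)] by (simp add: GC_coord_def)
  qed
qed

lemma inL_upS: "inL P i j \<Longrightarrow> inL P i (Suc j)" by (rule inL_up)
lemma inL_leftS: "P \<in> S \<Longrightarrow> inL P (Suc i) j \<Longrightarrow> inL P i j" using inL_left lastP(1) by blast

lemma xpt_P: "xpt \<in> PP"
  unfolding P_iff
proof (intro conjI allI impI ballI)
  fix t assume "t \<notin> e ` II" then show "xpt $ t = 0" by (simp add: xpt_def)
next
  fix c assume c: "c \<in> KK"
  obtain a b dd where abd: "c = ((a,b),dd)" by (cases c) auto
  have pI: "(a,b) \<in> II" using c abd by auto
  have nbI: "nb (a,b) dd \<in> II \<union> Lb" by (rule nb_box[OF pI])
  show "D xpt c \<ge> 0"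
  proof (cases dd)
    case True
    have "Zb a b \<le> Zb a (Suc b)" by (rule Zb_le) (rule inL_upS)
    then show ?thesis using abd True YY_xpt[OF nbI] YY_xpt[of "(a,b)"] pI by (simp add: Dg_def nb_def)
  next
    case False
    have "Zb (Suc a) b \<le> Zb a b" by (rule Zb_le) (rule inL_leftS)
    then show ?thesis using abd False YY_xpt[OF nbI] YY_xpt[of "(a,b)"] pI by (simp add: Dg_def nb_def)
  qed
qed

lemma notT_h: assumes "(a,b) \<in> II"
  shows "((a,b),True) \<notin> T xpt \<longleftrightarrow> (\<exists>P\<in>S. wt P > 0 \<and> inL P a (Suc b) \<and> \<not> inL P a b)"
proof -
  have nbI: "(a, Suc b) \<in> II \<union> Lb" using nb_box[OF assms, of True] by (simp add: nb_def)
  have "((a,b),True) \<notin> T xpt \<longleftrightarrow> Zb a (Suc b) \<noteq> Zb a b"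
    using T_iff[OF assms, of True xpt] YY_xpt[OF nbI] YY_xpt[of "(a,b)"] assms by (simp add: nb_def)
  also have "\<dots> \<longleftrightarrow> (\<exists>P\<in>S. wt P > 0 \<and> inL P a (Suc b) \<and> \<not> inL P a b)"
    by (rule Zb_neq) (rule inL_upS)
  finally show ?thesis .
qed

lemma notT_v: assumes "(a,b) \<in> II"
  shows "((a,b),False) \<notin> T xpt \<longleftrightarrow> (\<exists>P\<in>S. wt P > 0 \<and> inL P a b \<and> \<not> inL P (Suc a) b)"
proof -
  have nbI: "(Suc a, b) \<in> II \<union> Lb" using nb_box[OF assms, of False] by (simp add: nb_def)
  have "((a,b),False) \<notin> T xpt \<longleftrightarrow> Zb a b \<noteq> Zb (Suc a) b"
    using T_iff[OF assms, of False xpt] YY_xpt[OF nbI] YY_xpt[of "(a,b)"] assms by (auto simp: nb_def)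
  also have "\<dots> \<longleftrightarrow> (\<exists>P\<in>S. wt P > 0 \<and> inL P a b \<and> \<not> inL P (Suc a) b)"
    by (rule Zb_neq) (rule inL_leftS)
  finally show ?thesis .
qed

abbreviation "VS \<equiv> (\<Union>p\<in>S. set p)"
abbreviation "ES \<equiv> (\<Union>p\<in>S. path_edges p)"

lemma vert_bound: "P \<in> S \<Longrightarrow> u \<in> set P \<Longrightarrow> fst u \<le> cP P \<and> snd u \<le> n - cP P"
  using sw_le[OF lastP(1)] lastP(2) by fastforce

lemma ES_sub: "ES \<subseteq> EE xpt"
proof
  fix x assume "x \<in> ES"
  then obtain P where P: "P \<in> S" "x \<in> path_edges P" by blast
  obtain u v where uv: "x = (u,v)" by (cases x) blast
  have sP: "sw P" using lastP(1)[OF P(1)] .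
  have vs: "u \<in> set P" "v \<in> set P" using path_edges_in_set P(2) uv by auto
  have bv: "fst v \<le> cP P" "snd v \<le> n - cP P" using vert_bound[OF P(1) vs(2)] by auto
  have cn: "cP P \<le> n" using lastP(3)[OF P(1)] .
  obtain a b where u: "u = (a,b)" by (cases u) blast
  have "v = (Suc a, b) \<or> v = (a, Suc b)" using sw_step[OF sP, of u v] P(2) uv u by simp
  then show "x \<in> EE xpt"
  proof
    assume v: "v = (Suc a, b)"
    have "hEs n (T xpt) (Suc a, b)"
    proof (cases "b = 0")
      case True then show ?thesis using bv v cn by (simp add: hEs_def)
    next
      case False
      have I: "(Suc a, b) \<in> II" using False bv v cn by (auto simp: II_iff)
      have ed: "((a,b),(Suc a,b)) \<in> path_edges P" using P(2) uv u v by simp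
      have "inL P (Suc a) (Suc b) \<and> \<not> inL P (Suc a) b" using sw_horiz[OF sP] ed by blast
      moreover have "wt P > 0" using wt_pos[OF P(1)] bv v False cn by simp
      ultimately have "((Suc a, b), True) \<notin> T xpt" using notT_h[OF I] P(1) by blast
      then show ?thesis using bv v cn by (simp add: hEs_def)
    qed
    then show ?thesis using uv u v by (auto simp: Es_def)
  next
    assume v: "v = (a, Suc b)"
    have "vEs n (T xpt) (a, Suc b)"
    proof (cases "a = 0")
      case True then show ?thesis using bv v cn by (simp add: vEs_def)
    next
      case False
      have I: "(a, Suc b) \<in> II" using False bv v cn by (auto simp: II_iff)
      have ed: "((a,b),(a,Suc b)) \<in> path_edges P" using P(2) uv u v by simp
      have "inL P a (Suc b) \<and> \<not> inL P (Suc a) (Suc b)" using sw_vert[OF sP] ed by blast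
      moreover have "wt P > 0" using wt_pos[OF P(1)] bv v False cn by simp
      ultimately have "((a, Suc b), False) \<notin> T xpt" using notT_v[OF I] P(1) by blast
      then show ?thesis using bv v cn by (simp add: vEs_def)
    qed
    then show ?thesis using uv u v by (auto simp: Es_def)
  qed
qed


lemma term_n0: "(n, 0) \<in> terminals k"
  unfolding terminals_n using n_ps by (intro CollectI exI[of _ "length k"]) auto

lemma term_0n: "(0, n) \<in> terminals k"
  unfolding terminals_n by (intro CollectI exI[of _ 0]) auto

lemma EE_sub: "EE xpt \<subseteq> ES"
proof
  fix x assume x: "x \<in> EE xpt"
  then have "(\<exists>a b. x = ((a,b),(Suc a,b)) \<and> hEs n (T xpt) (Suc a, b)) \<or>
      (\<exists>a b. x = ((a,b),(a,Suc b)) \<and> vEs n (T xpt) (a, Suc b))"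
    unfolding Es_def by blast
  then show "x \<in> ES"
  proof
    assume "\<exists>a b. x = ((a,b),(Suc a,b)) \<and> hEs n (T xpt) (Suc a, b)"
    then obtain a b where ab: "x = ((a,b),(Suc a,b))" "hEs n (T xpt) (Suc a, b)" by blast
    have s: "Suc a + b \<le> n" using ab(2) by (simp add: hEs_def)
    show ?thesis
    proof (cases "b = 0")
      case True
      obtain P where P: "P \<in> S" "last P = (n, 0)" using term_path[of n] term_n0 by auto
      have sP: "sw P" using lastP(1)[OF P(1)] .
      have "inL P (Suc a) (Suc b)" using inL_above[OF sP, of "Suc a" "Suc b"] P(2) s by simp
      moreover have "\<not> inL P (Suc a) b" using True by (simp add: inL_def)
      ultimately have "x \<in> path_edges P" using sw_horiz[OF sP, of a b] ab(1) by simp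
      then show ?thesis using P(1) by blast
    next
      case False
      have I: "(Suc a, b) \<in> II" using False s by (auto simp: II_iff)
      have "((Suc a, b), True) \<notin> T xpt" using ab(2) False by (simp add: hEs_def)
      then obtain P where P: "P \<in> S" "inL P (Suc a) (Suc b)" "\<not> inL P (Suc a) b"
        using notT_h[OF I] by blast
      have "x \<in> path_edges P" using sw_horiz[OF lastP(1)[OF P(1)], of a b] P(2,3) ab(1) by simp
      then show ?thesis using P(1) by blast
    qed
  next
    assume "\<exists>a b. x = ((a,b),(a,Suc b)) \<and> vEs n (T xpt) (a, Suc b)"
    then obtain a b where ab: "x = ((a,b),(a,Suc b))" "vEs n (T xpt) (a, Suc b)" by blast
    have s: "a + Suc b \<le> n" using ab(2) by (simp add: vEs_def)
    show ?thesis
    proof (cases "a = 0")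
      case True
      obtain P where P: "P \<in> S" "last P = (0, n)" using term_path[of 0] term_0n by auto
      have sP: "sw P" using lastP(1)[OF P(1)] .
      have "inL P a (Suc b)" using True by (simp add: inL_def)
      moreover have "\<not> inL P (Suc a) (Suc b)" using inL_beyond[OF sP, of "Suc a"] P(2) by simp
      moreover have "Suc b \<le> snd (last P)" using P(2) s by simp
      ultimately have "x \<in> path_edges P" using sw_vert[OF sP, of a b] ab(1) by simp
      then show ?thesis using P(1) by blast
    next
      case False
      have I: "(a, Suc b) \<in> II" using False s by (auto simp: II_iff)
      have "((a, Suc b), False) \<notin> T xpt" using ab(2) False by (simp add: vEs_def)
      then obtain P where P: "P \<in> S" "inL P a (Suc b)" "\<not> inL P (Suc a) (Suc b)"
        using notT_v[OF I] by blast
      have sP: "sw P" using lastP(1)[OF P(1)] .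
      have "Suc b \<le> snd (last P)"
      proof (rule ccontr)
        assume "\<not> Suc b \<le> snd (last P)"
        then have "n - cP P < Suc b" using lastP(2)[OF P(1)] by simp
        then have "Suc a \<le> fst (last P)" "snd (last P) < Suc b" using s lastP(2,3)[OF P(1)] by auto
        then have "inL P (Suc a) (Suc b)" using inL_above[OF sP] by blast
        then show False using P(3) by simp
      qed
      then have "x \<in> path_edges P" using sw_vert[OF sP, of a b] P(2,3) ab(1) by simp
      then show ?thesis using P(1) by blast
    qed
  qed
qed

lemma EE_eq: "EE xpt = ES" using EE_sub ES_sub by (rule antisym)

lemma S_ne: "S \<noteq> {}" using S_term term_0n by blast

lemma VV_eq: "VV xpt = VS"
proof
  show "VS \<subseteq> VV xpt"
  proof
    fix v assume "v \<in> VS"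
    then obtain P where P: "P \<in> S" "v \<in> set P" by blast
    have "v \<in> insert (0,0) (snd ` path_edges P)" using sw_set_targets[OF lastP(1)[OF P(1)]] P(2) by blast
    then show "v \<in> VV xpt" using P(1) EE_eq by blast
  qed
next
  show "VV xpt \<subseteq> VS"
  proof
    fix v assume v: "v \<in> VV xpt"
    show "v \<in> VS"
    proof (cases "v = (0,0)")
      case True
      obtain P where P: "P \<in> S" using S_ne by blast
      have "hd P = (0,0)" "P \<noteq> []" using sw_ne[OF lastP(1)[OF P]] by auto
      then have "v \<in> set P" using True hd_in_set by metis
      then show ?thesis using P by blast
    next
      case False
      then have "v \<in> snd ` EE xpt" using v by blast
      then obtain x where "x \<in> EE xpt" "v = snd x" by blast
      then have "x \<in> ES" "v = snd x" using EE_eq by auto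
      then obtain P where "P \<in> S" "x \<in> path_edges P" by blast
      then show ?thesis using path_edges_in_set[of "fst x" "snd x" P] \<open>v = snd x\<close> by auto
    qed
  qed
qed

lemma Gs_xpt: "Gs n (T xpt) = (VS, ES)"
  using VV_eq EE_eq by (simp add: Gs_def)

end

context GCset begin

lemma L2:
  assumes "g \<in> ladder_faces k"
  shows "\<exists>x\<in>PP. Gs n (T x) = g"
proof -
  obtain V E S where g: "g = (V,E)" "terminals k \<subseteq> V" "\<forall>p\<in>S. positive_path k p"
    "V = (\<Union>p\<in>S. set p)" "E = (\<Union>p\<in>S. path_edges p)"
    using assms unfolding ladder_faces_def by blast
  have "GCface k n lam e S"
    unfolding GCface_def GCface_axioms_def using GCset_axioms g by blast
  then interpret F: GCface k n lam e S .
  show ?thesis using F.xpt_P F.Gs_xpt g by blast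
qed

end

lemma Es_mono: "T1 \<subseteq> T2 \<Longrightarrow> Es n T2 \<subseteq> Es n T1"
  unfolding Es_def hEs_def vEs_def by blast

lemma Gs_sub: "Es n T1 \<subseteq> Es n T2 \<Longrightarrow> subgraph (Gs n T1) (Gs n T2)"
  unfolding subgraph_def Gs_def by auto

lemma Es_refl:
  assumes "Es n T1 \<subseteq> Es n T2" "T2 \<subseteq> GC_index n \<times> UNIV"
  shows "T2 \<subseteq> T1"
proof
  fix c assume c: "c \<in> T2"
  obtain a b dd where abd: "c = ((a,b),dd)" by (cases c) auto
  have I: "1 \<le> a" "1 \<le> b" "a + b \<le> n" using assms(2) c abd by (auto simp: GC_index_def)
  show "c \<in> T1"
  proof (rule ccontr)
    assume nc: "c \<notin> T1"
    show False
    proof (cases dd)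
      case True
      obtain a' where a': "a = Suc a'" using I by (cases a) auto
      have "hEs n T1 (Suc a', b)" using nc abd True I a' by (simp add: hEs_def)
      then have "((a',b),(Suc a',b)) \<in> Es n T1" unfolding Es_def by blast
      then have "((a',b),(Suc a',b)) \<in> Es n T2" using assms(1) by blast
      then have "hEs n T2 (Suc a', b)" unfolding Es_def by auto
      then show False using c abd True I a' by (simp add: hEs_def)
    next
      case False
      obtain b' where b': "b = Suc b'" using I by (cases b) auto
      have "vEs n T1 (a, Suc b')" using nc abd False I b' by (simp add: vEs_def)
      then have "((a,b'),(a,Suc b')) \<in> Es n T1" unfolding Es_def by blast
      then have "((a,b'),(a,Suc b')) \<in> Es n T2" using assms(1) by blast
      then have "vEs n T2 (a, Suc b')" unfolding Es_def by auto
      then show False using c abd False I b' by (simp add: vEs_def)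
    qed
  qed
qed

context GCset begin

definition rep :: "(real^'d) set \<Rightarrow> real^'d" where
  "rep F = (SOME y. y \<in> F \<and> (\<forall>z\<in>F. T y \<subseteq> T z))"

definition phi :: "(real^'d) set \<Rightarrow> graph" where
  "phi F = Gs n (T (rep F))"

lemma rep_prop:
  assumes "F \<in> nonempty_faces PP"
  shows "rep F \<in> F" "\<forall>z\<in>F. T (rep F) \<subseteq> T z" "rep F \<in> PP" "F = Fy (rep F)"
proof -
  have F: "F face_of PP" "F \<noteq> {}" using assms by (auto simp: nonempty_faces_def)
  have "\<exists>y\<in>F. \<forall>z\<in>F. T y \<subseteq> T z"
    using rep_exists[OF face_of_imp_subset[OF F(1)] face_of_imp_convex[OF F(1)] F(2)] .
  then have "rep F \<in> F \<and> (\<forall>z\<in>F. T (rep F) \<subseteq> T z)"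
    unfolding rep_def by (rule someI_ex[where P = "\<lambda>y. y \<in> F \<and> (\<forall>z\<in>F. T y \<subseteq> T z)", OF bexE]) blast+
  then show r: "rep F \<in> F" "\<forall>z\<in>F. T (rep F) \<subseteq> T z" by auto
  then show "rep F \<in> PP" using face_of_imp_subset[OF F(1)] by blast
  show "F = Fy (rep F)" using FC[OF F(1) r] .
qed

lemma phi_order:
  assumes "F \<in> nonempty_faces PP" "F' \<in> nonempty_faces PP"
  shows "F \<subseteq> F' \<longleftrightarrow> subgraph (phi F) (phi F')"
proof
  assume "F \<subseteq> F'"
  then have "rep F \<in> F'" using rep_prop(1)[OF assms(1)] by blast
  then have "T (rep F') \<subseteq> T (rep F)" using rep_prop(2)[OF assms(2)] by blast
  then show "subgraph (phi F) (phi F')" unfolding phi_def by (intro Gs_sub Es_mono)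
next
  assume "subgraph (phi F) (phi F')"
  then have "Es n (T (rep F)) \<subseteq> Es n (T (rep F'))" unfolding phi_def subgraph_def Gs_def by simp
  then have sub: "T (rep F') \<subseteq> T (rep F)" using Es_refl T_sub by blast
  have "Fy (rep F) \<subseteq> Fy (rep F')" using sub unfolding Fy_def by blast
  then show "F \<subseteq> F'" using rep_prop(4)[OF assms(1)] rep_prop(4)[OF assms(2)] by simp
qed

lemma phi_dim:
  assumes "F \<in> nonempty_faces PP"
  shows "graph_dim (phi F) = aff_dim F"
proof -
  have "aff_dim F = int (card (Cor (rep F)))"
    using aff_dim_Fy[OF rep_prop(3)[OF assms]] rep_prop(4)[OF assms] by simp
  then show ?thesis unfolding phi_def using graph_dim_T[OF rep_prop(3)[OF assms]] by simp
qed

lemma phi_bij: "bij_betw phi (nonempty_faces PP) (ladder_faces k)"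
  unfolding bij_betw_def
proof
  show "inj_on phi (nonempty_faces PP)"
  proof (rule inj_onI)
    fix F F' assume a: "F \<in> nonempty_faces PP" "F' \<in> nonempty_faces PP" "phi F = phi F'"
    have "subgraph (phi F) (phi F')" "subgraph (phi F') (phi F)" using a(3) by (auto simp: subgraph_def)
    then show "F = F'" using phi_order[OF a(1,2)] phi_order[OF a(2,1)] by blast
  qed
  show "phi ` nonempty_faces PP = ladder_faces k"
  proof
    show "phi ` nonempty_faces PP \<subseteq> ladder_faces k"
      using L1 rep_prop(3) unfolding phi_def by blast
  next
    show "ladder_faces k \<subseteq> phi ` nonempty_faces PP"
    proof
      fix g assume "g \<in> ladder_faces k"
      then obtain x where x: "x \<in> PP" "Gs n (T x) = g" using L2 by blast
      have FN: "Fy x \<in> nonempty_faces PP" using face_Fy y_in_Fy[OF x(1)] by (auto simp: nonempty_faces_def)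
      have "T (rep (Fy x)) \<subseteq> T x" using rep_prop(2)[OF FN] y_in_Fy[OF x(1)] by blast
      moreover have "T x \<subseteq> T (rep (Fy x))" using rep_prop(1)[OF FN] by (simp add: Fy_def)
      ultimately have "phi (Fy x) = g" using x(2) unfolding phi_def by simp
      then show "g \<in> phi ` nonempty_faces PP" using FN by blast
    qed
  qed
qed

lemma main:
  "\<exists>\<phi>. bij_betw \<phi> (nonempty_faces (GC_polytope n lam e)) (ladder_faces k) \<and>
           (\<forall>F \<in> nonempty_faces (GC_polytope n lam e). \<forall>F' \<in> nonempty_faces (GC_polytope n lam e).
               F \<subseteq> F' \<longleftrightarrow> subgraph (\<phi> F) (\<phi> F')) \<and>
           (\<forall>F \<in> nonempty_faces (GC_polytope n lam e). graph_dim (\<phi> F) = aff_dim F)"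
  using phi_bij phi_order phi_dim by blast

end

theorem theorem1p1:
  fixes k :: "nat list" and n :: nat and lam :: "nat \<Rightarrow> real"
    and e :: "nat \<times> nat \<Rightarrow> 'd::finite"
  assumes "\<forall>ki \<in> set k. ki > 0"
    and "n = sum_list k"
    and "lambda_of_type k lam"
    and "inj_on e (GC_index n)"
  shows "\<exists>\<phi>. bij_betw \<phi> (nonempty_faces (GC_polytope n lam e)) (ladder_faces k) \<and>
           (\<forall>F \<in> nonempty_faces (GC_polytope n lam e). \<forall>F' \<in> nonempty_faces (GC_polytope n lam e).
               F \<subseteq> F' \<longleftrightarrow> subgraph (\<phi> F) (\<phi> F')) \<and>
           (\<forall>F \<in> nonempty_faces (GC_polytope n lam e). graph_dim (\<phi> F) = aff_dim F)"
proof -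
  interpret GCset k n lam e using assms(2,3,4) by unfold_locales
  show ?thesis by (rule main)
qed


end
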